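(* Let $\mathbb{T}$ be a time scale, $a<b$ points of $\mathbb{T}$, $I_\mathbb{T}=[a,\infty)\cap\mathbb{T}$, and $\mathbb{X}$ a Banach space with norm $\|\cdot\|$. Let $f:I_\mathbb{T}\times\mathbb{X}\times\mathbb{X}\times\mathbb{X}\to\mathbb{X}$ be rd-continuous in its first variable and $h,g:I_\mathbb{T}\times I_\mathbb{T}\times\mathbb{X}\to\mathbb{X}$ be rd-continuous in their second variable, and consider $$x(t)=f\Big(t,x(t),\int_a^t h(t,s,x(s))\Delta s,\int_a^b g(t,s,x(s))\Delta s\Big),\quad t\in I_\mathbb{T}. \qquad (\ast)$$ Suppose there exist positive constants $\alpha,B,C$ and a constant $0\leq N<1$ such that for all $t,s\in I_\mathbb{T}$ and $u,v,w,\bar u,\bar v,\bar w\in\mathbb{X}$: $\|f(t,u,v,w)-f(t,\bar{u},\bar{v},\bar{w})\|\leq N\{\|u-\bar{u}\|+\|v-\bar{v}\|+\|w-\bar{w}\|\}$, $\|h(t,s,v)-h(t,s,\bar{v})\|\leq Be_\alpha(s,t)\|v-\bar{v}\|$, $\|g(t,s,u)-g(t,s,\bar{u})\|\leq Ce_\alpha(s,t)\|u-\bar{u}\|$, and $$q:=\int_a^bCN^*e_{BN^*}(s,a)\Delta s<1,\qquad N^*=\frac{N}{1-N}.$$ Moreover assume there is a nonnegative constant $d$ with $$\Big\|f\Big(t,0,\int_a^th(t,s,0)\Delta s,\int_a^bg(t,s,0)\Delta s\Big)\Big\|\leq \frac{d}{e_\alpha(t,a)},\quad t\in I_\mathbb{T}.$$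 If $x$ is any solution of $(\ast)$, then $$\|x(t)\|\leq \frac{d}{(1-N)(1-q)}\,e_{BN^*\ominus\alpha}(t,a),\quad t\in I_\mathbb{T}.$$
   Context: A time scale $\mathbb{T}$ is a nonempty closed subset of $\mathbb{R}$; $\sigma(t)=\inf\{s\in\mathbb{T}:s>t\}$, $\mu(t)=\sigma(t)-t$. rd-continuous means continuous at right-dense points with finite left limits at left-dense points; $\int\cdot\,\Delta s$ is the delta integral. For rd-continuous $p$ with $1+\mu p\neq0$, $e_p(t,s)=\exp\big(\int_s^t\xi_{\mu(\tau)}(p(\tau))\Delta\tau\big)$, where $\xi_h(z)=\log(1+hz)/h$ for $h\neq0$ and $\xi_0(z)=z$. For regressive $p,q$, $(p\ominus q)(t)=\frac{p(t)-q(t)}{1+\mu(t)q(t)}$. A solution of $(\ast)$ is an rd-continuous $x:I_\mathbb{T}\to\mathbb{X}$ satisfying $(\ast)$. *)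

theory Defs
  imports "HOL-Analysis.Analysis"
begin

definition time_scale :: "real set \<Rightarrow> bool" where
  "time_scale T \<longleftrightarrow> T \<noteq> {} \<and> closed T"

definition sigma :: "real set \<Rightarrow> real \<Rightarrow> real" where
  "sigma T t = (if \<exists>s\<in>T. s > t then Inf {s\<in>T. s > t} else t)"

definition rho :: "real set \<Rightarrow> real \<Rightarrow> real" where
  "rho T t = (if \<exists>s\<in>T. s < t then Sup {s\<in>T. s < t} else t)"

definition mu :: "real set \<Rightarrow> real \<Rightarrow> real" where
  "mu T t = sigma T t - t"

definition in_Tkappa :: "real set \<Rightarrow> real \<Rightarrow> bool" where
  "in_Tkappa T t \<longleftrightarrow> t \<in> T \<and> \<not> ((\<forall>s\<in>T. s \<le> t) \<and> rho T t < t)"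

definition rd_continuous_on :: "real set \<Rightarrow> real set \<Rightarrow> (real \<Rightarrow> 'a::topological_space) \<Rightarrow> bool" where
  "rd_continuous_on T S f \<longleftrightarrow>
     (\<forall>t\<in>S. (sigma T t = t \<longrightarrow> continuous (at t within S) f) \<and>
             (rho T t = t \<longrightarrow> (\<exists>L. (f \<longlongrightarrow> L) (at t within (S \<inter> {..<t})))))"

definition has_delta_derivative :: "real set \<Rightarrow> (real \<Rightarrow> 'a::real_normed_vector) \<Rightarrow> 'a \<Rightarrow> real \<Rightarrow> bool" where
  "has_delta_derivative T F D t \<longleftrightarrow>
     (\<forall>\<epsilon>>0. \<exists>\<delta>>0. \<forall>s\<in>T. \<bar>t - s\<bar> < \<delta> \<longrightarrow>
        norm (F (sigma T t) - F s - (sigma T t - s) *\<^sub>R D) \<le> \<epsilon> * \<bar>sigma T t - s\<bar>)"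

text \<open>Delta (Cauchy) integral: \<open>\<integral>_a^b f \<Delta>s = F b - F a\<close> where F is an
  antiderivative of f, i.e. F^Delta = f on T^kappa (restricted to the
  interval between a and b, where the integrand is given).\<close>

definition delta_integral :: "real set \<Rightarrow> (real \<Rightarrow> 'a::banach) \<Rightarrow> real \<Rightarrow> real \<Rightarrow> 'a" where
  "delta_integral T f a b =
     (THE v. \<exists>F. (\<forall>t. in_Tkappa T t \<and> min a b \<le> t \<and> t \<le> max a b \<longrightarrow>
                        has_delta_derivative T F (f t) t) \<and> v = F b - F a)"

text \<open>Cylinder transformation and the (real) exponential function on T,
  for positively regressive p (the only case used here).\<close>

definition xi :: "real \<Rightarrow> real \<Rightarrow> real" where
  "xi h z = (if h = 0 then z else ln (1 + h * z) / h)"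

definition ts_exp :: "real set \<Rightarrow> (real \<Rightarrow> real) \<Rightarrow> real \<Rightarrow> real \<Rightarrow> real" where
  "ts_exp T p t s = exp (delta_integral T (\<lambda>\<tau>. xi (mu T \<tau>) (p \<tau>)) s t)"

definition ts_ominus :: "real set \<Rightarrow> (real \<Rightarrow> real) \<Rightarrow> (real \<Rightarrow> real) \<Rightarrow> real \<Rightarrow> real" where
  "ts_ominus T p q t = (p t - q t) / (1 + mu T t * q t)"

end

theory Submission
  imports Defs
begin



definition tfl :: "real set \<Rightarrow> real \<Rightarrow> real" where
  "tfl T r = Sup {s\<in>T. s \<le> r}"

definition ldense :: "real set \<Rightarrow> real \<Rightarrow> bool" where
  "ldense T t \<longleftrightarrow> (\<forall>\<delta>>0. \<exists>s\<in>T. t - \<delta> < s \<and> s < t)"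

lemma sigma_ge: "sigma T t \<ge> t"
proof (cases "\<exists>s\<in>T. s > t")
  case True
  then show ?thesis unfolding sigma_def by (auto intro!: cInf_greatest)
qed (simp add: sigma_def)

lemma sigma_le: "s \<in> T \<Longrightarrow> s > t \<Longrightarrow> sigma T t \<le> s"
  unfolding sigma_def by (auto intro!: cInf_lower simp: bdd_below_def intro: less_imp_le)

lemma sigma_gap: "s \<in> T \<Longrightarrow> t < s \<Longrightarrow> s < sigma T t \<Longrightarrow> False"
  using sigma_le by fastforce

lemma sigma_in:
  assumes "closed T" "s \<in> T" "s > t" "sigma T t > t"
  shows "sigma T t \<in> T"
proof -
  have ne: "{s\<in>T. s > t} \<noteq> {}" using assms by auto
  have bb: "bdd_below {s\<in>T. s > t}" by (auto simp: bdd_below_def intro: less_imp_le)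
  have e: "sigma T t = Inf {s\<in>T. s > t}" using assms unfolding sigma_def by auto
  have "Inf {s\<in>T. s > t} \<in> closure {s\<in>T. s > t}"
    using closure_contains_Inf[OF ne bb] .
  also have "\<dots> \<subseteq> closure T" by (rule closure_mono) auto
  finally show ?thesis using e assms closure_closed by auto
qed

lemma sigma_rdense:
  assumes "sigma T t = t" "s0 \<in> T" "s0 > t" "\<delta> > 0"
  shows "\<exists>s\<in>T. t < s \<and> s < t + \<delta>"
proof -
  have ne: "{s\<in>T. s > t} \<noteq> {}" using assms by auto
  have bb: "bdd_below {s\<in>T. s > t}" by (auto simp: bdd_below_def intro: less_imp_le)
  have ex: "\<exists>x\<in>T. t < x" using assms by auto
  have e: "Inf {s\<in>T. s > t} = t" using assms(1) ex unfolding sigma_def by simp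
  then have "Inf {s\<in>T. s > t} < t + \<delta>" using assms by simp
  then show ?thesis using cInf_less_iff[OF ne bb] by auto
qed

lemma tfl_props:
  assumes "closed T" "a \<in> T" "a \<le> r"
  shows "tfl T r \<in> T" "a \<le> tfl T r" "tfl T r \<le> r"
proof -
  have ne: "{s\<in>T. s \<le> r} \<noteq> {}" using assms by auto
  have bb: "bdd_above {s\<in>T. s \<le> r}" by (auto simp: bdd_above_def)
  have cl: "closed {s\<in>T. s \<le> r}"
    using closed_Int[OF assms(1) closed_atMost[of r]] by (simp add: Int_def atMost_def)
  show "tfl T r \<in> T" using closed_contains_Sup[OF ne bb cl] unfolding tfl_def by auto
  show "a \<le> tfl T r" unfolding tfl_def using assms by (auto intro!: cSup_upper bb)
  show "tfl T r \<le> r" unfolding tfl_def using ne by (auto intro!: cSup_least)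
qed

lemma tfl_upper: "s \<in> T \<Longrightarrow> s \<le> r \<Longrightarrow> s \<le> tfl T r"
  unfolding tfl_def by (auto intro!: cSup_upper simp: bdd_above_def)

lemma tfl_self: "closed T \<Longrightarrow> t \<in> T \<Longrightarrow> tfl T t = t"
  using tfl_props[of T t t] tfl_upper[of t T t] by auto

lemma tfl_const: "x1 \<le> x2 \<Longrightarrow> (\<And>s. s \<in> T \<Longrightarrow> x1 < s \<Longrightarrow> s \<le> x2 \<Longrightarrow> False) \<Longrightarrow> tfl T x2 = tfl T x1"
  unfolding tfl_def by (rule arg_cong[where f=Sup]) (force)

lemma ldense_rho: "ldense T t \<Longrightarrow> rho T t = t"
proof -
  assume ld: "ldense T t"
  then obtain s0 where s0: "s0 \<in> T" "s0 < t" unfolding ldense_def by (meson zero_less_one)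
  have ne: "{s\<in>T. s < t} \<noteq> {}" using s0 by auto
  have bb: "bdd_above {s\<in>T. s < t}" by (auto simp: bdd_above_def intro: less_imp_le)
  have le: "Sup {s\<in>T. s < t} \<le> t" using ne by (auto intro!: cSup_least intro: less_imp_le)
  have ge: "Sup {s\<in>T. s < t} \<ge> t"
  proof (rule field_le_epsilon)
    fix e :: real assume "e > 0"
    then obtain s where "s \<in> T" "t - e < s" "s < t" using ld unfolding ldense_def by blast
    then have "s \<le> Sup {s\<in>T. s < t}" by (auto intro!: cSup_upper bb)
    then show "t \<le> Sup {s\<in>T. s < t} + e" using \<open>t - e < s\<close> by linarith
  qed
  show ?thesis unfolding rho_def using s0 le ge by auto
qed

lemma ldense_Tkappa: "ldense T t \<Longrightarrow> t \<in> T \<Longrightarrow> in_Tkappa T t"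
  using ldense_rho unfolding in_Tkappa_def by auto

lemma Tkappa_below: "t \<in> T \<Longrightarrow> b \<in> T \<Longrightarrow> t < b \<Longrightarrow> in_Tkappa T t"
  unfolding in_Tkappa_def by force

lemma ts_induct:
  assumes cl: "closed T" and aT: "a \<in> T" and bT: "b \<in> T" and ab: "a \<le> b"
    and P0: "P a"
    and Prs: "\<And>t. t \<in> T \<Longrightarrow> a \<le> t \<Longrightarrow> t < b \<Longrightarrow> sigma T t > t \<Longrightarrow> P t \<Longrightarrow> P (sigma T t)"
    and Prd: "\<And>t. t \<in> T \<Longrightarrow> a \<le> t \<Longrightarrow> t < b \<Longrightarrow> sigma T t = t \<Longrightarrow> P t \<Longrightarrow>
               \<exists>\<delta>>0. \<forall>s\<in>T. t < s \<and> s < t + \<delta> \<longrightarrow> P s"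
    and Pld: "\<And>t. t \<in> T \<Longrightarrow> a < t \<Longrightarrow> t \<le> b \<Longrightarrow> ldense T t \<Longrightarrow>
               (\<And>s. s \<in> T \<Longrightarrow> a \<le> s \<Longrightarrow> s < t \<Longrightarrow> P s) \<Longrightarrow> P t"
    and tT: "t \<in> T" "a \<le> t" "t \<le> b"
  shows "P t"
proof (rule ccontr)
  assume nP: "\<not> P t"
  define S where "S = {t\<in>T. a \<le> t \<and> t \<le> b \<and> \<not> P t}"
  have ne: "S \<noteq> {}" using nP tT unfolding S_def by auto
  have bb: "bdd_below S" unfolding S_def by (auto simp: bdd_below_def)
  define s0 where "s0 = Inf S"
  have s0cl: "s0 \<in> closure S" unfolding s0_def by (rule closure_contains_Inf[OF ne bb])
  have "closure S \<subseteq> closure (T \<inter> {a..b})" by (rule closure_mono) (auto simp: S_def)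
  also have "\<dots> = T \<inter> {a..b}" using cl by (simp add: closed_Int closure_closed)
  finally have s0T: "s0 \<in> T" "a \<le> s0" "s0 \<le> b" using s0cl by auto
  have lower: "\<And>e. e \<in> S \<Longrightarrow> s0 \<le> e" unfolding s0_def by (rule cInf_lower[OF _ bb])
  have below: "P r" if "r \<in> T" "a \<le> r" "r < s0" for r
  proof (rule ccontr)
    assume "\<not> P r" then have "r \<in> S" using that s0T unfolding S_def by auto
    then show False using lower that by force
  qed
  have Ps0: "P s0"
  proof (cases "s0 = a")
    case True then show ?thesis using P0 by simp
  next
    case False
    then have as0: "a < s0" using s0T by auto
    show ?thesis
    proof (cases "ldense T s0")
      case True then show ?thesis using Pld[OF s0T(1) as0 s0T(3)] below by blast
    next
      case False
      then obtain \<delta> where d: "\<delta> > 0" "\<And>s. s \<in> T \<Longrightarrow> \<not> (s0 - \<delta> < s \<and> s < s0)"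
        unfolding ldense_def by blast
      define d' where "d' = min \<delta> (s0 - a)"
      have d'p: "d' > 0" "d' \<le> \<delta>" "d' \<le> s0 - a" using d as0 unfolding d'_def by auto
      define r where "r = tfl T (s0 - d')"
      have rT: "r \<in> T" "a \<le> r" "r \<le> s0 - d'" using tfl_props[OF cl aT, of "s0 - d'"] d'p
        unfolding r_def by auto
      have sig: "sigma T r = s0"
      proof (rule antisym)
        show "sigma T r \<le> s0" using sigma_le[OF s0T(1)] rT d'p by auto
        have ex: "\<exists>s\<in>T. s > r" using s0T rT d'p by (intro bexI[of _ s0]) auto
        have "s0 \<le> Inf {s\<in>T. s > r}"
        proof (rule cInf_greatest)
          show "{s\<in>T. s > r} \<noteq> {}" using ex by auto
          fix s assume s: "s \<in> {s\<in>T. s > r}"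
          show "s0 \<le> s"
          proof (rule ccontr)
            assume "\<not> s0 \<le> s"
            then have "s \<le> s0 - d'" using d(2)[of s] s d'p by force
            then have "s \<le> r" unfolding r_def using tfl_upper s by auto
            then show False using s by auto
          qed
        qed
        then show "s0 \<le> sigma T r" unfolding sigma_def using ex by auto
      qed
      have "P r" using below rT d'p by auto
      then have "P (sigma T r)" using Prs[OF rT(1) rT(2)] rT d'p s0T sig by auto
      then show ?thesis using sig by simp
    qed
  qed
  obtain e where e: "e \<in> S" using ne by auto
  have eS: "e \<in> T" "a \<le> e" "e \<le> b" "\<not> P e" using e unfolding S_def by auto
  have s0e: "s0 < e" using lower[OF e] Ps0 eS by (cases "s0 = e") auto
  show False
  proof (cases "sigma T s0 > s0")
    case True
    have sT: "sigma T s0 \<in> T" using sigma_in[OF cl eS(1) s0e True] .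
    have Ps: "P (sigma T s0)" using Prs[OF s0T(1) s0T(2) _ True Ps0] s0e eS by auto
    have "sigma T s0 \<le> Inf S"
    proof (rule cInf_greatest[OF ne])
      fix e' assume e': "e' \<in> S"
      then have "s0 \<le> e'" using lower by auto
      moreover have "e' \<noteq> s0" using e' Ps0 unfolding S_def by auto
      ultimately show "sigma T s0 \<le> e'" using sigma_le[of e' T s0] e' unfolding S_def by auto
    qed
    then show False using True unfolding s0_def by simp
  next
    case False
    then have ss: "sigma T s0 = s0" using sigma_ge[where t=s0 and T=T] by auto
    obtain \<delta> where d: "\<delta> > 0" "\<And>s. s \<in> T \<Longrightarrow> s0 < s \<Longrightarrow> s < s0 + \<delta> \<Longrightarrow> P s"
      using Prd[OF s0T(1) s0T(2) _ ss Ps0] s0e eS by auto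
    have "s0 + \<delta> \<le> Inf S"
    proof (rule cInf_greatest[OF ne])
      fix e' assume e': "e' \<in> S"
      then have "s0 \<le> e'" using lower by auto
      moreover have "e' \<noteq> s0" using e' Ps0 unfolding S_def by auto
      ultimately show "s0 + \<delta> \<le> e'" using d(2)[of e'] e' unfolding S_def by force
    qed
    then show False using d unfolding s0_def by simp
  qed
qed




lemma dd0_iff: "has_delta_derivative T F 0 t \<longleftrightarrow>
  (\<forall>\<epsilon>>0. \<exists>\<delta>>0. \<forall>s\<in>T. \<bar>t - s\<bar> < \<delta> \<longrightarrow> norm (F (sigma T t) - F s) \<le> \<epsilon> * \<bar>sigma T t - s\<bar>)"
  unfolding has_delta_derivative_def by simp

lemma delta_zero:
  fixes F :: "real \<Rightarrow> 'a::real_normed_vector"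
  assumes cl: "closed T" and aT: "a \<in> T" and bT: "b \<in> T" and ab: "a \<le> b"
    and D: "\<And>t. t \<in> T \<Longrightarrow> a \<le> t \<Longrightarrow> t \<le> b \<Longrightarrow> in_Tkappa T t \<Longrightarrow> has_delta_derivative T F 0 t"
  shows "F b = F a"
proof -
  have key: "norm (F b - F a) \<le> \<epsilon> * (b - a)" if ep: "\<epsilon> > 0" for \<epsilon>
  proof (rule ts_induct[OF cl aT bT ab, where P="\<lambda>t. norm (F t - F a) \<le> \<epsilon> * (t - a)"])
    show "norm (F a - F a) \<le> \<epsilon> * (a - a)" by simp
  next
    fix t assume t: "t \<in> T" "a \<le> t" "t < b" "sigma T t > t" and Pt: "norm (F t - F a) \<le> \<epsilon> * (t - a)"
    have Dt: "has_delta_derivative T F 0 t" using D[OF t(1) t(2)] t Tkappa_below[OF t(1) bT] by auto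
    have "norm (F (sigma T t) - F t) \<le> 0 + e" if "e > 0" for e
    proof -
      have "e / (sigma T t - t) > 0" using that t by auto
      then obtain \<delta> where "\<delta> > 0" "\<forall>s\<in>T. \<bar>t - s\<bar> < \<delta> \<longrightarrow> norm (F (sigma T t) - F s) \<le> e / (sigma T t - t) * \<bar>sigma T t - s\<bar>"
        using Dt unfolding dd0_iff by blast
      then have "norm (F (sigma T t) - F t) \<le> e / (sigma T t - t) * \<bar>sigma T t - t\<bar>" using t by auto
      also have "\<dots> = e" using t by simp
      finally show ?thesis by simp
    qed
    then have "F (sigma T t) = F t" using field_le_epsilon[of "norm (F (sigma T t) - F t)" 0] by simp
    then show "norm (F (sigma T t) - F a) \<le> \<epsilon> * (sigma T t - a)"
    proof -
      have "\<epsilon> * (t - a) \<le> \<epsilon> * (sigma T t - a)" using t ep by auto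
      with Pt \<open>F (sigma T t) = F t\<close> show ?thesis by simp
    qed
  next
    fix t assume t: "t \<in> T" "a \<le> t" "t < b" "sigma T t = t" and Pt: "norm (F t - F a) \<le> \<epsilon> * (t - a)"
    have Dt: "has_delta_derivative T F 0 t" using D[OF t(1) t(2)] t Tkappa_below[OF t(1) bT] by auto
    obtain \<delta> where d: "\<delta> > 0" "\<forall>s\<in>T. \<bar>t - s\<bar> < \<delta> \<longrightarrow> norm (F t - F s) \<le> \<epsilon> * \<bar>t - s\<bar>"
      using Dt ep t(4) unfolding dd0_iff by metis
    show "\<exists>\<delta>>0. \<forall>s\<in>T. t < s \<and> s < t + \<delta> \<longrightarrow> norm (F s - F a) \<le> \<epsilon> * (s - a)"
    proof (intro exI[of _ \<delta>] conjI ballI impI)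
      fix s assume s: "s \<in> T" "t < s \<and> s < t + \<delta>"
      then have "norm (F t - F s) \<le> \<epsilon> * (s - t)" using d by auto
      then have "norm (F s - F t) \<le> \<epsilon> * (s - t)" by (simp add: norm_minus_commute)
      from norm_diff_triangle_le[OF this Pt]
      show "norm (F s - F a) \<le> \<epsilon> * (s - a)" by (simp add: algebra_simps)
    qed (use d in auto)
  next
    fix t assume t: "t \<in> T" "a < t" "t \<le> b" "ldense T t"
      and IH: "\<And>s. s \<in> T \<Longrightarrow> a \<le> s \<Longrightarrow> s < t \<Longrightarrow> norm (F s - F a) \<le> \<epsilon> * (s - a)"
    have Dt: "has_delta_derivative T F 0 t" using D[OF t(1)] t ldense_Tkappa by auto
    show "norm (F t - F a) \<le> \<epsilon> * (t - a)"
    proof (rule field_le_epsilon)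
      fix \<eta> :: real assume eta: "\<eta> > 0"
      define m where "m = sigma T t - t + 1"
      have m: "m \<ge> 1" using sigma_ge[where T=T and t=t] unfolding m_def by simp
      have "\<eta> / (2 * m) > 0" using eta m by auto
      then obtain \<delta> where d: "\<delta> > 0" "\<forall>s\<in>T. \<bar>t - s\<bar> < \<delta> \<longrightarrow> norm (F (sigma T t) - F s) \<le> \<eta> / (2 * m) * \<bar>sigma T t - s\<bar>"
        using Dt unfolding dd0_iff by blast
      obtain s where s: "s \<in> T" "t - min 1 (min \<delta> (t - a)) < s" "s < t"
        using t(4) d(1) t(2) unfolding ldense_def by (metis min_less_iff_conj zero_less_one diff_gt_0_iff_gt)
      have s1: "norm (F (sigma T t) - F s) \<le> \<eta> / (2 * m) * \<bar>sigma T t - s\<bar>" using d s by auto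
      have s2: "norm (F (sigma T t) - F t) \<le> \<eta> / (2 * m) * \<bar>sigma T t - t\<bar>" using d t by auto
      have "\<bar>sigma T t - s\<bar> \<le> m" "\<bar>sigma T t - t\<bar> \<le> m"
        using s sigma_ge[where T=T and t=t] unfolding m_def by auto
      then have "\<eta> / (2 * m) * \<bar>sigma T t - s\<bar> \<le> \<eta> / 2" "\<eta> / (2 * m) * \<bar>sigma T t - t\<bar> \<le> \<eta> / 2"
        using m eta by (auto simp: field_simps)
      with s1 s2 have "norm (F t - F (sigma T t)) \<le> \<eta>/2" "norm (F (sigma T t) - F s) \<le> \<eta>/2"
        by (auto simp: norm_minus_commute)
      from norm_diff_triangle_le[OF this] have "norm (F t - F s) \<le> \<eta>" by simp
      moreover have "norm (F s - F a) \<le> \<epsilon> * (s - a)" using IH s by auto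
      ultimately have "norm (F t - F a) \<le> \<eta> + \<epsilon> * (s - a)" by (rule norm_diff_triangle_le)
      moreover have "\<epsilon> * (s - a) \<le> \<epsilon> * (t - a)" using s ep by auto
      ultimately show "norm (F t - F a) \<le> \<epsilon> * (t - a) + \<eta>" by linarith
    qed
  qed (use bT ab in auto)
  show ?thesis
  proof -
    have "norm (F b - F a) \<le> 0 + e" if "e > 0" for e
    proof -
      have "norm (F b - F a) \<le> e / (b - a + 1) * (b - a)" using key[of "e / (b - a + 1)"] that ab by auto
      also have "\<dots> \<le> e" using that ab by (auto simp: field_simps)
      finally show ?thesis by simp
    qed
    then show ?thesis using field_le_epsilon[of "norm (F b - F a)" 0] by simp
  qed
qed




lemma reg_ext_step:
  fixes g :: "real \<Rightarrow> 'a::banach"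
  assumes "lo \<le> y" "y \<le> z" and h: "h integrable_on {lo..y}" "\<forall>x\<in>{lo..y}. norm (g x - h x) \<le> \<epsilon>"
    and L: "\<And>x. y < x \<Longrightarrow> x < z \<Longrightarrow> norm (g x - L) \<le> \<epsilon>" and ep: "\<epsilon> \<ge> 0"
  shows "\<exists>h'. h' integrable_on {lo..z} \<and> (\<forall>x\<in>{lo..z}. norm (g x - h' x) \<le> \<epsilon>)"
proof -
  define h' where "h' x = (if x \<le> y then h x else if x < z then L else g z)" for x
  have i1: "h' integrable_on {lo..y}"
    by (rule integrable_eq[OF h(1)]) (auto simp: h'_def)
  have i2: "h' integrable_on {y..z}"
    by (rule integrable_spike_finite[where S="{y,z}" and f="\<lambda>x. L"]) (auto simp: h'_def)
  have "h' integrable_on {lo..z}" by (rule Henstock_Kurzweil_Integration.integrable_combine[OF assms(1,2) i1 i2])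
  moreover have "\<forall>x\<in>{lo..z}. norm (g x - h' x) \<le> \<epsilon>"
    using h(2) L ep by (auto simp: h'_def)
  ultimately show ?thesis by blast
qed

lemma regulated_integrable:
  fixes g :: "real \<Rightarrow> 'a::banach"
  assumes lohi: "lo \<le> hi"
    and R: "\<And>r \<epsilon>. r \<in> {lo..hi} \<Longrightarrow> \<epsilon> > 0 \<Longrightarrow> \<exists>\<delta>>0. \<exists>L. \<forall>x. r < x \<and> x < r + \<delta> \<longrightarrow> norm (g x - L) \<le> \<epsilon>"
    and L: "\<And>r \<epsilon>. r \<in> {lo..hi} \<Longrightarrow> \<epsilon> > 0 \<Longrightarrow> \<exists>\<delta>>0. \<exists>L. \<forall>x. r - \<delta> < x \<and> x < r \<longrightarrow> norm (g x - L) \<le> \<epsilon>"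
  shows "g integrable_on {lo..hi}"
proof -
  have "g integrable_on cbox lo hi"
  proof (rule integrable_uniform_limit)
    fix \<epsilon> :: real assume ep: "\<epsilon> > 0"
    define Q where "Q y \<longleftrightarrow> (\<exists>h. h integrable_on {lo..y} \<and> (\<forall>x\<in>{lo..y}. norm (g x - h x) \<le> \<epsilon>))" for y
    define S where "S = {y\<in>{lo..hi}. Q y}"
    have Qlo: "Q lo"
    proof -
      have "g integrable_on {lo..lo}" using integrable_on_refl[of g lo] by (simp only: cbox_interval)
      then show ?thesis unfolding Q_def using ep by (intro exI[of _ g]) auto
    qed
    have loS: "lo \<in> S" using Qlo lohi unfolding S_def by auto
    have bb: "bdd_above S" unfolding S_def by (auto simp: bdd_above_def)
    have ne: "S \<noteq> {}" using loS by auto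
    define s where "s = Sup S"
    have sS: "lo \<le> s" "s \<le> hi" unfolding s_def using loS bb ne
      by (auto intro!: cSup_upper cSup_least simp: S_def)
    have Qs: "Q s"
    proof (cases "s = lo")
      case True then show ?thesis using Qlo by simp
    next
      case False
      then have ls: "lo < s" using sS by auto
      obtain \<delta> L0 where d: "\<delta> > 0" "\<And>x. s - \<delta> < x \<and> x < s \<Longrightarrow> norm (g x - L0) \<le> \<epsilon>"
        using L[of s \<epsilon>] sS ep by auto
      have "s - min \<delta> (s - lo) < Sup S" using d ls unfolding s_def by auto
      then obtain y where y: "y \<in> S" "s - min \<delta> (s - lo) < y" using less_cSup_iff[OF ne bb] by auto
      have ys: "y \<le> s" unfolding s_def by (rule cSup_upper[OF y(1) bb])
      from y have Qy: "Q y" "lo \<le> y" unfolding S_def by auto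
      then show ?thesis unfolding Q_def
        using reg_ext_step[of lo y s _ g \<epsilon> L0] ys d y ep by auto
    qed
    have shi: "s = hi"
    proof (rule ccontr)
      assume "s \<noteq> hi" then have sh: "s < hi" using sS by auto
      obtain \<delta> L1 where d: "\<delta> > 0" "\<And>x. s < x \<and> x < s + \<delta> \<Longrightarrow> norm (g x - L1) \<le> \<epsilon>"
        using R[of s \<epsilon>] sS ep by auto
      define z where "z = min hi (s + \<delta>/2)"
      have z: "s < z" "z \<le> hi" using sh d unfolding z_def by auto
      have "Q z" using Qs unfolding Q_def
        using reg_ext_step[of lo s z _ g \<epsilon> L1] z d sS ep unfolding z_def by auto
      then have "z \<in> S" using z sS unfolding S_def by auto
      then have "z \<le> s" unfolding s_def by (rule cSup_upper[OF _ bb])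
      then show False using z by simp
    qed
    show "\<exists>h. (\<forall>x\<in>cbox lo hi. norm (g x - h x) \<le> \<epsilon>) \<and> h integrable_on cbox lo hi"
      using Qs shi unfolding Q_def by (auto simp: cbox_interval)
  qed
  then show ?thesis by (simp add: cbox_interval)
qed




definition RD :: "real set \<Rightarrow> real \<Rightarrow> (real \<Rightarrow> 'a::real_normed_vector) \<Rightarrow> bool" where
  "RD T a f \<longleftrightarrow>
    (\<forall>t\<in>T. a \<le> t \<longrightarrow> sigma T t = t \<longrightarrow>
       (\<forall>\<epsilon>>0. \<exists>\<delta>>0. \<forall>y\<in>T. a \<le> y \<longrightarrow> \<bar>y - t\<bar> < \<delta> \<longrightarrow> norm (f y - f t) \<le> \<epsilon>)) \<and>
    (\<forall>t\<in>T. a < t \<longrightarrow> ldense T t \<longrightarrow>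
       (\<forall>\<epsilon>>0. \<exists>\<delta>>0. \<exists>L. \<forall>y\<in>T. a \<le> y \<longrightarrow> t - \<delta> < y \<longrightarrow> y < t \<longrightarrow> norm (f y - L) \<le> \<epsilon>))"

definition ext :: "real set \<Rightarrow> real \<Rightarrow> (real \<Rightarrow> 'a) \<Rightarrow> real \<Rightarrow> 'a" where
  "ext T a f r = (if r < a then f a else f (tfl T r))"

lemma RD_R: "RD T a f \<Longrightarrow> t \<in> T \<Longrightarrow> a \<le> t \<Longrightarrow> sigma T t = t \<Longrightarrow> \<epsilon> > 0 \<Longrightarrow>
   \<exists>\<delta>>0. \<forall>y\<in>T. a \<le> y \<longrightarrow> \<bar>y - t\<bar> < \<delta> \<longrightarrow> norm (f y - f t) \<le> \<epsilon>"
  unfolding RD_def by blast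

lemma RD_L: "RD T a f \<Longrightarrow> t \<in> T \<Longrightarrow> a < t \<Longrightarrow> ldense T t \<Longrightarrow> \<epsilon> > 0 \<Longrightarrow>
   \<exists>\<delta>>0. \<exists>L. \<forall>y\<in>T. a \<le> y \<longrightarrow> t - \<delta> < y \<longrightarrow> y < t \<longrightarrow> norm (f y - L) \<le> \<epsilon>"
  unfolding RD_def by blast

lemma sigma_gt_ex: "sigma T t > t \<Longrightarrow> \<exists>s\<in>T. s > t"
  unfolding sigma_def by (auto split: if_splits)

lemma notT_ball:
  fixes T :: "real set" and r :: real
  assumes "closed T" "r \<notin> T"
  obtains \<delta> where "\<delta> > 0" "\<And>s. s \<in> T \<Longrightarrow> \<bar>s - r\<bar> < \<delta> \<Longrightarrow> False"
proof -
  have "open (- T)" using assms by auto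
  then obtain \<delta> where "\<delta> > 0" "ball r \<delta> \<subseteq> - T" using assms open_contains_ball by blast
  then show ?thesis using that by (auto simp: dist_real_def abs_minus_commute subset_iff)
qed

lemma ext_R:
  assumes cl: "closed T" and aT: "a \<in> T" and RD: "RD T a f" and ep: "\<epsilon> > 0"
  shows "\<exists>\<delta>>0. \<exists>L. \<forall>x. r < x \<and> x < r + \<delta> \<longrightarrow> norm (ext T a f x - L) \<le> \<epsilon>"
proof (cases "r < a")
  case True
  then show ?thesis using ep by (intro exI[of _ "a - r"] conjI exI[of _ "f a"]) (auto simp: ext_def)
next
  case False
  then have ar: "a \<le> r" by simp
  show ?thesis
  proof (cases "r \<in> T")
    case rT: True
      show ?thesis
      proof (cases "sigma T r > r")
        case True
        have "norm (ext T a f x - f r) \<le> \<epsilon>" if "r < x" "x < r + (sigma T r - r)" for x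
        proof -
          have "tfl T x = tfl T r"
            by (rule tfl_const) (use that sigma_gap in fastforce)+
          then show ?thesis using that ar tfl_self[OF cl rT] ep by (simp add: ext_def)
        qed
        then show ?thesis using True by (intro exI[of _ "sigma T r - r"] conjI exI[of _ "f r"]) auto
      next
        case False
        then have sr: "sigma T r = r" using sigma_ge[where T=T and t=r] by auto
        obtain \<delta> where d: "\<delta> > 0" "\<forall>y\<in>T. a \<le> y \<longrightarrow> \<bar>y - r\<bar> < \<delta> \<longrightarrow> norm (f y - f r) \<le> \<epsilon>"
          using RD_R[OF RD rT ar sr ep] by blast
        have "norm (ext T a f x - f r) \<le> \<epsilon>" if "r < x" "x < r + \<delta>" for x
        proof -
          have "tfl T x \<in> T" "a \<le> tfl T x" "tfl T x \<le> x" using tfl_props[OF cl aT, of x] that ar by auto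
          moreover have "r \<le> tfl T x" using tfl_upper[OF rT] that by auto
          ultimately show ?thesis using d that ar by (auto simp: ext_def)
        qed
        then show ?thesis using d by (intro exI[of _ \<delta>] conjI exI[of _ "f r"]) auto
      qed
  next
    case rT: False
    obtain \<delta> where d: "\<delta> > 0" "\<And>s. s \<in> T \<Longrightarrow> \<bar>s - r\<bar> < \<delta> \<Longrightarrow> False" using notT_ball[OF cl rT] by blast
    have "norm (ext T a f x - f (tfl T r)) \<le> \<epsilon>" if "r < x" "x < r + \<delta>" for x
    proof -
      have "tfl T x = tfl T r"
        by (rule tfl_const) (use that d in fastforce)+
      then show ?thesis using that ar ep by (simp add: ext_def)
    qed
    then show ?thesis using d by (intro exI[of _ \<delta>] conjI exI[of _ "f (tfl T r)"]) auto
  qed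
qed

lemma ext_L:
  assumes cl: "closed T" and aT: "a \<in> T" and RD: "RD T a f" and ep: "\<epsilon> > 0"
  shows "\<exists>\<delta>>0. \<exists>L. \<forall>x. r - \<delta> < x \<and> x < r \<longrightarrow> norm (ext T a f x - L) \<le> \<epsilon>"
proof (cases "r \<le> a")
  case True
  then show ?thesis using ep by (intro exI[of _ 1] conjI exI[of _ "f a"]) (auto simp: ext_def)
next
  case False
  then have ar: "a < r" by simp
  show ?thesis
  proof (cases "r \<in> T")
    case rT: True
    show ?thesis
    proof (cases "ldense T r")
      case True
      obtain \<delta> L where d: "\<delta> > 0" "\<forall>y\<in>T. a \<le> y \<longrightarrow> r - \<delta> < y \<longrightarrow> y < r \<longrightarrow> norm (f y - L) \<le> \<epsilon>"
        using RD_L[OF RD rT ar True ep] by blast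
      obtain y0 where y0: "y0 \<in> T" "r - min \<delta> (r - a) < y0" "y0 < r"
        using True d(1) ar unfolding ldense_def by (metis diff_gt_0_iff_gt min_less_iff_conj)
      have "norm (ext T a f x - L) \<le> \<epsilon>" if "r - (r - y0) < x" "x < r" for x
      proof -
        have ax: "a \<le> x" using that y0 by auto
        have "tfl T x \<in> T" "a \<le> tfl T x" "tfl T x \<le> x" using tfl_props[OF cl aT ax] by auto
        moreover have "y0 \<le> tfl T x" using tfl_upper[OF y0(1)] that by auto
        ultimately show ?thesis using d that y0 ax by (auto simp: ext_def)
      qed
      then show ?thesis using y0 by (intro exI[of _ "r - y0"] conjI exI[of _ L]) auto
    next
      case False
      then obtain \<delta>0 where d0: "\<delta>0 > 0" "\<And>s. s \<in> T \<Longrightarrow> \<not> (r - \<delta>0 < s \<and> s < r)"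
        unfolding ldense_def by blast
      define \<delta> where "\<delta> = min \<delta>0 (r - a)"
      have dp: "\<delta> > 0" "\<delta> \<le> \<delta>0" "\<delta> \<le> r - a" using d0 ar unfolding \<delta>_def by auto
      have "norm (ext T a f x - f (tfl T (r - \<delta>))) \<le> \<epsilon>" if "r - \<delta> < x" "x < r" for x
      proof -
        have "tfl T x = tfl T (r - \<delta>)"
          by (rule tfl_const) (use that d0 dp in fastforce)+
        then show ?thesis using that dp ep by (simp add: ext_def)
      qed
      then show ?thesis using dp by (intro exI[of _ \<delta>] conjI exI[of _ "f (tfl T (r - \<delta>))"]) auto
    qed
  next
    case rT: False
    obtain \<delta> where d: "\<delta> > 0" "\<And>s. s \<in> T \<Longrightarrow> \<bar>s - r\<bar> < \<delta> \<Longrightarrow> False" using notT_ball[OF cl rT] by blast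
    have "norm (ext T a f x - f (tfl T r)) \<le> \<epsilon>" if "r - min \<delta> (r - a) < x" "x < r" for x
    proof -
      have "tfl T r = tfl T x"
        by (rule tfl_const) (use that d rT in fastforce)+
      moreover have "a < x" using that by auto
      ultimately show ?thesis using that ep by (simp add: ext_def)
    qed
    then show ?thesis using d ar by (intro exI[of _ "min \<delta> (r - a)"] conjI exI[of _ "f (tfl T r)"]) auto
  qed
qed

lemma ext_integrable:
  fixes f :: "real \<Rightarrow> 'a::banach"
  assumes cl: "closed T" and aT: "a \<in> T" and RD: "RD T a f"
  shows "ext T a f integrable_on {lo..hi}"
proof (cases "lo \<le> hi")
  case True
  show ?thesis
    by (rule regulated_integrable[OF True]) (use ext_R[OF cl aT RD] ext_L[OF cl aT RD] in auto)
next
  case False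
  then show ?thesis by (simp add: integrable_on_empty)
qed




lemma int_near_const:
  fixes e :: "real \<Rightarrow> 'a::banach"
  assumes uv: "u \<le> v" and ie: "e integrable_on {u..v}" and b: "\<And>x. x \<in> {u..v} \<Longrightarrow> norm (e x - c) \<le> B"
  shows "norm (integral {u..v} e - (v - u) *\<^sub>R c) \<le> B * (v - u)"
proof -
  have "integral {u..v} (\<lambda>x. e x - c) = integral {u..v} e - (v - u) *\<^sub>R c"
    using Henstock_Kurzweil_Integration.integral_diff[OF ie integrable_const_ivl[of c u v]] uv
    by (simp add: content_real)
  moreover have "norm (integral {u..v} (\<lambda>x. e x - c)) \<le> integral {u..v} (\<lambda>x. B)"
    by (rule integral_norm_bound_integral)
       (auto intro!: Henstock_Kurzweil_Integration.integrable_diff ie b)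
  moreover have "integral {u..v} (\<lambda>x. B) = B * (v - u)" using uv by (simp add: content_real)
  ultimately show ?thesis by (metis (no_types, lifting))
qed

lemma Ph_diff:
  fixes f :: "real \<Rightarrow> 'a::banach"
  assumes cl: "closed T" and aT: "a \<in> T" and RD: "RD T a f" and "lo \<le> u" "u \<le> v"
  shows "integral {lo..v} (ext T a f) - integral {lo..u} (ext T a f) = integral {u..v} (ext T a f)"
  using Henstock_Kurzweil_Integration.integral_combine[OF assms(4,5) ext_integrable[OF cl aT RD]]
  by (metis add_diff_cancel_left')

lemma ext_deriv:
  fixes f :: "real \<Rightarrow> 'a::banach"
  assumes cl: "closed T" and aT: "a \<in> T" and RD: "RD T a f" and tT: "t \<in> T" and at: "a \<le> t"
  shows "has_delta_derivative T (\<lambda>r. integral {a - 1..r} (ext T a f)) (f t) t"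
proof -
  define e where "e = ext T a f"
  define Ph where "Ph r = integral {a - 1..r} e" for r
  have Phd: "Ph v - Ph u = integral {u..v} e" if "a - 1 \<le> u" "u \<le> v" for u v
    using Ph_diff[OF cl aT RD that] unfolding Ph_def e_def .
  have ie: "e integrable_on {lo..hi}" for lo hi unfolding e_def by (rule ext_integrable[OF cl aT RD])
  have et: "e t = f t" using tfl_self[OF cl tT] at unfolding e_def ext_def by auto
  have "\<forall>\<epsilon>>0. \<exists>\<delta>>0. \<forall>s\<in>T. \<bar>t - s\<bar> < \<delta> \<longrightarrow>
        norm (Ph (sigma T t) - Ph s - (sigma T t - s) *\<^sub>R f t) \<le> \<epsilon> * \<bar>sigma T t - s\<bar>"
  proof (intro allI impI)
    fix \<epsilon> :: real assume ep: "\<epsilon> > 0"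
    show "\<exists>\<delta>>0. \<forall>s\<in>T. \<bar>t - s\<bar> < \<delta> \<longrightarrow>
        norm (Ph (sigma T t) - Ph s - (sigma T t - s) *\<^sub>R f t) \<le> \<epsilon> * \<bar>sigma T t - s\<bar>"
    proof (cases "sigma T t > t")
      case True
      define \<mu> where "\<mu> = sigma T t - t"
      have mu: "\<mu> > 0" using True unfolding \<mu>_def by simp
      have A: "Ph (sigma T t) - Ph t = \<mu> *\<^sub>R f t"
      proof -
        have "Ph (sigma T t) - Ph t = integral {t..sigma T t} e" using Phd[of t "sigma T t"] at True by auto
        also have "\<dots> = integral {t..sigma T t} (\<lambda>x. f t)"
        proof (rule integral_spike[of "{sigma T t}"])
          fix x assume x: "x \<in> {t..sigma T t} - {sigma T t}"
          have "tfl T x = tfl T t"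
            by (rule tfl_const) (use x sigma_gap in fastforce)+
          then show "f t = e x" using x at tfl_self[OF cl tT] unfolding e_def ext_def by auto
        qed auto
        also have "\<dots> = \<mu> *\<^sub>R f t" using True unfolding \<mu>_def by (simp add: content_real)
        finally show ?thesis .
      qed
      obtain \<delta>1 L where d1: "\<delta>1 > 0" "\<And>x. t - \<delta>1 < x \<and> x < t \<Longrightarrow> norm (e x - L) \<le> 1"
        using ext_L[OF cl aT RD, of 1 t] unfolding e_def by auto
      define M where "M = 1 + norm (L - f t)"
      have M: "M \<ge> 1" unfolding M_def by simp
      have Mb: "norm (e x - f t) \<le> M" if "t - \<delta>1 < x" "x \<le> t" for x
      proof (cases "x = t")
        case True then show ?thesis using et M by simp
      next
        case False
        then have "norm (e x - L) \<le> 1" using d1 that by auto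
        then show ?thesis unfolding M_def using norm_triangle_ineq[of "e x - L" "L - f t"] by simp
      qed
      define \<delta> where "\<delta> = min (min 1 \<delta>1) (min \<mu> (\<epsilon> * \<mu> / M))"
      have dp: "\<delta> > 0" "\<delta> \<le> 1" "\<delta> \<le> \<delta>1" "\<delta> \<le> \<mu>" "\<delta> \<le> \<epsilon> * \<mu> / M"
        using d1 mu ep M unfolding \<delta>_def by auto
      then have dp5: "\<delta> * M \<le> \<epsilon> * \<mu>" using M by (simp add: le_divide_eq)
      show ?thesis
      proof (intro exI[of _ \<delta>] conjI ballI impI)
        fix s assume sT: "s \<in> T" and st: "\<bar>t - s\<bar> < \<delta>"
        have "s \<le> t"
        proof (rule ccontr)
          assume "\<not> s \<le> t" then have "t < s" "s < sigma T t" using st dp unfolding \<mu>_def by auto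
          then show False using sigma_gap sT by blast
        qed
        have eq: "Ph (sigma T t) - Ph s - (sigma T t - s) *\<^sub>R f t =
                  (integral {s..t} e - (t - s) *\<^sub>R f t) + (Ph (sigma T t) - Ph t - \<mu> *\<^sub>R f t)"
          using Phd[of s t] \<open>s \<le> t\<close> st dp at unfolding \<mu>_def by (simp add: algebra_simps)
        have "norm (integral {s..t} e - (t - s) *\<^sub>R f t) \<le> M * (t - s)"
          by (rule int_near_const[OF \<open>s \<le> t\<close> ie]) (use st dp Mb in auto)
        also have "\<dots> \<le> M * \<delta>" using st M \<open>s \<le> t\<close> by auto
        also have "\<dots> \<le> \<epsilon> * \<mu>" using dp5 by (simp add: mult.commute)
        also have "\<dots> \<le> \<epsilon> * \<bar>sigma T t - s\<bar>" using ep \<open>s \<le> t\<close> unfolding \<mu>_def by auto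
        finally show "norm (Ph (sigma T t) - Ph s - (sigma T t - s) *\<^sub>R f t) \<le> \<epsilon> * \<bar>sigma T t - s\<bar>"
          using eq A by simp
      qed (use dp in auto)
    next
      case False
      then have st: "sigma T t = t" using sigma_ge[where T=T and t=t] by auto
      obtain \<delta>0 where d0: "\<delta>0 > 0" "\<forall>y\<in>T. a \<le> y \<longrightarrow> \<bar>y - t\<bar> < \<delta>0 \<longrightarrow> norm (f y - f t) \<le> \<epsilon>"
        using RD_R[OF RD tT at st ep] by blast
      define \<delta> where "\<delta> = min 1 \<delta>0"
      have dp: "\<delta> > 0" "\<delta> \<le> 1" "\<delta> \<le> \<delta>0" using d0 unfolding \<delta>_def by auto
      show ?thesis
      proof (intro exI[of _ \<delta>] conjI ballI impI)
        fix s assume sT: "s \<in> T" and ts: "\<bar>t - s\<bar> < \<delta>"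
        show "norm (Ph (sigma T t) - Ph s - (sigma T t - s) *\<^sub>R f t) \<le> \<epsilon> * \<bar>sigma T t - s\<bar>"
        proof (cases "s \<le> t")
          case True
          have b: "norm (e x - f t) \<le> \<epsilon>" if "x \<in> {s..t}" for x
          proof (cases "x < a")
            case True
            then show ?thesis using d0 aT at that ts dp unfolding e_def ext_def by auto
          next
            case False
            have "tfl T x \<in> T" "a \<le> tfl T x" "tfl T x \<le> x" using tfl_props[OF cl aT, of x] False by auto
            moreover have "s \<le> tfl T x" using tfl_upper[OF sT] that by auto
            ultimately show ?thesis using d0 False that ts dp unfolding e_def ext_def by auto
          qed
          have "norm (integral {s..t} e - (t - s) *\<^sub>R f t) \<le> \<epsilon> * (t - s)"
            by (rule int_near_const[OF True ie b])
          moreover have "Ph t - Ph s = integral {s..t} e" using Phd[of s t] True ts dp at by auto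
          ultimately show ?thesis using st True by simp
        next
          case False
          have b: "norm (e x - f t) \<le> \<epsilon>" if "x \<in> {t..s}" for x
          proof -
            have "tfl T x \<in> T" "a \<le> tfl T x" "tfl T x \<le> x" using tfl_props[OF cl aT, of x] that at by auto
            moreover have "t \<le> tfl T x" using tfl_upper[OF tT] that by auto
            ultimately show ?thesis using d0 that ts dp at unfolding e_def ext_def by auto
          qed
          have "norm (integral {t..s} e - (s - t) *\<^sub>R f t) \<le> \<epsilon> * (s - t)"
            using False by (intro int_near_const[OF _ ie b]) auto
          moreover have "Ph s - Ph t = integral {t..s} e" using Phd[of t s] False at by auto
          moreover have "Ph t - Ph s - (t - s) *\<^sub>R f t = - (integral {t..s} e - (s - t) *\<^sub>R f t)"
            using calculation(2) by (simp add: algebra_simps)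
          ultimately show ?thesis using st False by (simp only: norm_minus_cancel) simp
        qed
      qed (use dp in auto)
    qed
  qed
  then show ?thesis unfolding has_delta_derivative_def Ph_def e_def .
qed

lemma dd_diff0:
  fixes F G :: "real \<Rightarrow> 'a::real_normed_vector"
  assumes "has_delta_derivative T F D t" "has_delta_derivative T G D t"
  shows "has_delta_derivative T (\<lambda>r. F r - G r) 0 t"
  unfolding dd0_iff
proof (intro allI impI)
  fix \<epsilon> :: real assume ep: "\<epsilon> > 0"
  obtain d1 where d1: "d1 > 0" "\<forall>s\<in>T. \<bar>t - s\<bar> < d1 \<longrightarrow>
      norm (F (sigma T t) - F s - (sigma T t - s) *\<^sub>R D) \<le> \<epsilon>/2 * \<bar>sigma T t - s\<bar>"
    using assms(1) ep unfolding has_delta_derivative_def by (meson half_gt_zero)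
  obtain d2 where d2: "d2 > 0" "\<forall>s\<in>T. \<bar>t - s\<bar> < d2 \<longrightarrow>
      norm (G (sigma T t) - G s - (sigma T t - s) *\<^sub>R D) \<le> \<epsilon>/2 * \<bar>sigma T t - s\<bar>"
    using assms(2) ep unfolding has_delta_derivative_def by (meson half_gt_zero)
  show "\<exists>\<delta>>0. \<forall>s\<in>T. \<bar>t - s\<bar> < \<delta> \<longrightarrow>
      norm (F (sigma T t) - G (sigma T t) - (F s - G s)) \<le> \<epsilon> * \<bar>sigma T t - s\<bar>"
  proof (intro exI[of _ "min d1 d2"] conjI ballI impI)
    fix s assume "s \<in> T" "\<bar>t - s\<bar> < min d1 d2"
    then have d12: "norm (F (sigma T t) - F s - (sigma T t - s) *\<^sub>R D) \<le> \<epsilon>/2 * \<bar>sigma T t - s\<bar>"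
      "norm (G (sigma T t) - G s - (sigma T t - s) *\<^sub>R D) \<le> \<epsilon>/2 * \<bar>sigma T t - s\<bar>"
      using d1 d2 by auto
    have "F (sigma T t) - G (sigma T t) - (F s - G s) =
      (F (sigma T t) - F s - (sigma T t - s) *\<^sub>R D) - (G (sigma T t) - G s - (sigma T t - s) *\<^sub>R D)"
      by (simp add: algebra_simps)
    then have "norm (F (sigma T t) - G (sigma T t) - (F s - G s)) \<le>
      norm (F (sigma T t) - F s - (sigma T t - s) *\<^sub>R D) + norm (G (sigma T t) - G s - (sigma T t - s) *\<^sub>R D)"
      by (simp only: norm_triangle_ineq4)
    moreover have "\<epsilon>/2 * \<bar>sigma T t - s\<bar> + \<epsilon>/2 * \<bar>sigma T t - s\<bar> = \<epsilon> * \<bar>sigma T t - s\<bar>" by simp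
    ultimately show "norm (F (sigma T t) - G (sigma T t) - (F s - G s)) \<le> \<epsilon> * \<bar>sigma T t - s\<bar>"
      using d12 by linarith
  qed (use d1 d2 in auto)
qed

lemma delta_integral_rep:
  fixes f :: "real \<Rightarrow> 'a::banach"
  assumes cl: "closed T" and aT: "a \<in> T" and RD: "RD T a f"
    and uT: "u \<in> T" "a \<le> u" and vT: "v \<in> T" "a \<le> v"
  shows "delta_integral T f u v = integral {a..v} (ext T a f) - integral {a..u} (ext T a f)"
proof -
  define Ph where "Ph r = integral {a - 1..r} (ext T a f)" for r
  have Pd: "has_delta_derivative T Ph (f t) t" if "t \<in> T" "a \<le> t" for t
    using ext_deriv[OF cl aT RD that] unfolding Ph_def .
  define P where "P w \<longleftrightarrow> (\<exists>F. (\<forall>t. in_Tkappa T t \<and> min u v \<le> t \<and> t \<le> max u v \<longrightarrow>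
                        has_delta_derivative T F (f t) t) \<and> w = F v - F u)" for w
  have "delta_integral T f u v = (THE w. P w)" unfolding delta_integral_def P_def ..
  also have "\<dots> = Ph v - Ph u"
  proof (rule the_equality)
    show "P (Ph v - Ph u)" unfolding P_def
      using Pd uT vT by (intro exI[of _ Ph]) (auto simp: in_Tkappa_def)
  next
    fix w assume "P w"
    then obtain G where G: "\<And>t. in_Tkappa T t \<Longrightarrow> min u v \<le> t \<Longrightarrow> t \<le> max u v \<Longrightarrow>
        has_delta_derivative T G (f t) t" and w: "w = G v - G u" unfolding P_def by blast
    have H: "(\<lambda>r. G r - Ph r) (max u v) = (\<lambda>r. G r - Ph r) (min u v)"
    proof (rule delta_zero[OF cl])
      show "min u v \<in> T" "max u v \<in> T" "min u v \<le> max u v" using uT vT by (auto simp: min_def max_def)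
      fix t assume "t \<in> T" "min u v \<le> t" "t \<le> max u v" "in_Tkappa T t"
      then show "has_delta_derivative T (\<lambda>r. G r - Ph r) 0 t"
        using G Pd uT vT by (intro dd_diff0) auto
    qed
    then show "w = Ph v - Ph u" unfolding w by (cases "u \<le> v") (auto simp: min_def max_def algebra_simps)
  qed
  also have "\<dots> = integral {a..v} (ext T a f) - integral {a..u} (ext T a f)"
  proof -
    have "Ph v - Ph a = integral {a..v} (ext T a f)" "Ph u - Ph a = integral {a..u} (ext T a f)"
      using Ph_diff[OF cl aT RD, of "a - 1" a] uT vT unfolding Ph_def by auto
    then show ?thesis by (simp add: algebra_simps)
  qed
  finally show ?thesis .
qed




lemma RD_cong:
  assumes f: "RD T a f" and eq: "\<And>s. s \<in> T \<Longrightarrow> a \<le> s \<Longrightarrow> f s = g s"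
  shows "RD T a g"
  unfolding RD_def
proof (intro conjI ballI impI allI)
  fix t \<epsilon> :: real assume t: "t \<in> T" "a \<le> t" "sigma T t = t" "\<epsilon> > 0"
  then show "\<exists>\<delta>>0. \<forall>y\<in>T. a \<le> y \<longrightarrow> \<bar>y - t\<bar> < \<delta> \<longrightarrow> norm (g y - g t) \<le> \<epsilon>"
    using RD_R[OF f t(1-3) t(4)] eq by (metis (no_types, lifting))
next
  fix t \<epsilon> :: real assume t: "t \<in> T" "a < t" "ldense T t" "\<epsilon> > 0"
  then show "\<exists>\<delta>>0. \<exists>L. \<forall>y\<in>T. a \<le> y \<longrightarrow> t - \<delta> < y \<longrightarrow> y < t \<longrightarrow> norm (g y - L) \<le> \<epsilon>"
    using RD_L[OF f t(1-3) t(4)] eq by (metis (no_types, lifting))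
qed

lemma ext_cong: "closed T \<Longrightarrow> a \<in> T \<Longrightarrow> (\<And>s. s \<in> T \<Longrightarrow> a \<le> s \<Longrightarrow> f s = g s) \<Longrightarrow> ext T a f r = ext T a g r"
  unfolding ext_def using tfl_props[of T a r] by auto

lemma rd_to_RD:
  assumes "rd_continuous_on T ({a..} \<inter> T) f"
  shows "RD T a f"
  unfolding RD_def
proof (intro conjI ballI impI allI)
  fix t \<epsilon> :: real assume t: "t \<in> T" "a \<le> t" "sigma T t = t" "\<epsilon> > 0"
  then have "continuous (at t within ({a..} \<inter> T)) f" using assms unfolding rd_continuous_on_def by auto
  then obtain \<delta> where "\<delta> > 0" "\<forall>y\<in>{a..} \<inter> T. dist y t < \<delta> \<longrightarrow> dist (f y) (f t) < \<epsilon>"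
    using t(4) unfolding continuous_within_eps_delta by blast
  then show "\<exists>\<delta>>0. \<forall>y\<in>T. a \<le> y \<longrightarrow> \<bar>y - t\<bar> < \<delta> \<longrightarrow> norm (f y - f t) \<le> \<epsilon>"
    by (intro exI[of _ \<delta>]) (auto simp: dist_norm intro: less_imp_le)
next
  fix t \<epsilon> :: real assume t: "t \<in> T" "a < t" "ldense T t" "\<epsilon> > 0"
  then obtain L where "(f \<longlongrightarrow> L) (at t within ({a..} \<inter> T \<inter> {..<t}))"
    using assms ldense_rho[OF t(3)] unfolding rd_continuous_on_def by auto
  then obtain \<delta> where d: "\<delta> > 0" "\<forall>y\<in>{a..} \<inter> T \<inter> {..<t}. 0 < dist y t \<and> dist y t < \<delta> \<longrightarrow> dist (f y) L < \<epsilon>"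
    using t(4) unfolding Lim_within by blast
  show "\<exists>\<delta>>0. \<exists>L. \<forall>y\<in>T. a \<le> y \<longrightarrow> t - \<delta> < y \<longrightarrow> y < t \<longrightarrow> norm (f y - L) \<le> \<epsilon>"
  proof (intro exI[of _ \<delta>] conjI exI[of _ L] ballI impI)
    fix y assume "y \<in> T" "a \<le> y" "t - \<delta> < y" "y < t"
    then show "norm (f y - L) \<le> \<epsilon>" using d by (auto simp: dist_norm intro: less_imp_le)
  qed (use d in auto)
qed

lemma RD_cont:
  assumes "\<And>c. continuous_on {a..c} f"
  shows "RD T a f"
  unfolding RD_def
proof (intro conjI ballI impI allI)
  fix t \<epsilon> :: real assume t: "t \<in> T" "a \<le> t" "\<epsilon> > 0"
  obtain \<delta> where d: "\<delta> > 0" "\<forall>y\<in>{a..t+1}. dist y t < \<delta> \<longrightarrow> dist (f y) (f t) < \<epsilon>"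
    using assms[of "t+1"] t unfolding continuous_on_iff by (metis atLeastAtMost_iff less_add_one order.strict_implies_order)
  show "\<exists>\<delta>>0. \<forall>y\<in>T. a \<le> y \<longrightarrow> \<bar>y - t\<bar> < \<delta> \<longrightarrow> norm (f y - f t) \<le> \<epsilon>"
    using d by (intro exI[of _ "min \<delta> 1"]) (auto simp: dist_norm intro: less_imp_le)
next
  fix t \<epsilon> :: real assume t: "t \<in> T" "a < t" "ldense T t" "\<epsilon> > 0"
  obtain \<delta> where d: "\<delta> > 0" "\<forall>y\<in>{a..t+1}. dist y t < \<delta> \<longrightarrow> dist (f y) (f t) < \<epsilon>"
    using assms[of "t+1"] t unfolding continuous_on_iff by (metis atLeastAtMost_iff less_add_one less_imp_le)
  show "\<exists>\<delta>>0. \<exists>L. \<forall>y\<in>T. a \<le> y \<longrightarrow> t - \<delta> < y \<longrightarrow> y < t \<longrightarrow> norm (f y - L) \<le> \<epsilon>"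
    using d by (intro exI[of _ "\<delta>"] conjI exI[of _ "f t"]) (auto simp: dist_norm intro: less_imp_le)
qed

lemma RD_const: "RD T a (\<lambda>_. c)"
  by (rule RD_cont) (rule continuous_on_const)

lemma RD_diff:
  fixes f g :: "real \<Rightarrow> 'a::real_normed_vector"
  assumes f: "RD T a f" and g: "RD T a g"
  shows "RD T a (\<lambda>s. f s - g s)"
  unfolding RD_def
proof (intro conjI ballI impI allI)
  fix t \<epsilon> :: real assume t: "t \<in> T" "a \<le> t" "sigma T t = t" "\<epsilon> > 0"
  obtain d1 where d1: "d1 > 0" "\<forall>y\<in>T. a \<le> y \<longrightarrow> \<bar>y - t\<bar> < d1 \<longrightarrow> norm (f y - f t) \<le> \<epsilon>/2"
    using RD_R[OF f t(1-3), of "\<epsilon>/2"] t(4) by auto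
  obtain d2 where d2: "d2 > 0" "\<forall>y\<in>T. a \<le> y \<longrightarrow> \<bar>y - t\<bar> < d2 \<longrightarrow> norm (g y - g t) \<le> \<epsilon>/2"
    using RD_R[OF g t(1-3), of "\<epsilon>/2"] t(4) by auto
  show "\<exists>\<delta>>0. \<forall>y\<in>T. a \<le> y \<longrightarrow> \<bar>y - t\<bar> < \<delta> \<longrightarrow> norm (f y - g y - (f t - g t)) \<le> \<epsilon>"
  proof (intro exI[of _ "min d1 d2"] conjI ballI impI)
    fix y assume y: "y \<in> T" "a \<le> y" "\<bar>y - t\<bar> < min d1 d2"
    have "norm (f y - g y - (f t - g t)) \<le> norm (f y - f t) + norm (g y - g t)"
      using norm_triangle_ineq4[of "f y - f t" "g y - g t"] by (simp add: algebra_simps)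
    then show "norm (f y - g y - (f t - g t)) \<le> \<epsilon>" using d1 d2 y by force
  qed (use d1 d2 in auto)
next
  fix t \<epsilon> :: real assume t: "t \<in> T" "a < t" "ldense T t" "\<epsilon> > 0"
  obtain d1 L1 where d1: "d1 > 0" "\<forall>y\<in>T. a \<le> y \<longrightarrow> t - d1 < y \<longrightarrow> y < t \<longrightarrow> norm (f y - L1) \<le> \<epsilon>/2"
    using RD_L[OF f t(1-3), of "\<epsilon>/2"] t(4) by auto
  obtain d2 L2 where d2: "d2 > 0" "\<forall>y\<in>T. a \<le> y \<longrightarrow> t - d2 < y \<longrightarrow> y < t \<longrightarrow> norm (g y - L2) \<le> \<epsilon>/2"
    using RD_L[OF g t(1-3), of "\<epsilon>/2"] t(4) by auto
  show "\<exists>\<delta>>0. \<exists>L. \<forall>y\<in>T. a \<le> y \<longrightarrow> t - \<delta> < y \<longrightarrow> y < t \<longrightarrow> norm (f y - g y - L) \<le> \<epsilon>"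
  proof (intro exI[of _ "min d1 d2"] conjI exI[of _ "L1 - L2"] ballI impI)
    fix y assume y: "y \<in> T" "a \<le> y" "t - min d1 d2 < y" "y < t"
    have "norm (f y - g y - (L1 - L2)) \<le> norm (f y - L1) + norm (g y - L2)"
      using norm_triangle_ineq4[of "f y - L1" "g y - L2"] by (simp add: algebra_simps)
    then show "norm (f y - g y - (L1 - L2)) \<le> \<epsilon>" using d1 d2 y by force
  qed (use d1 d2 in auto)
qed

lemma RD_norm:
  fixes f :: "real \<Rightarrow> 'a::real_normed_vector"
  assumes f: "RD T a f"
  shows "RD T a (\<lambda>s. norm (f s))"
  unfolding RD_def
proof (intro conjI ballI impI allI)
  fix t \<epsilon> :: real assume t: "t \<in> T" "a \<le> t" "sigma T t = t" "\<epsilon> > 0"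
  obtain d1 where d1: "d1 > 0" "\<forall>y\<in>T. a \<le> y \<longrightarrow> \<bar>y - t\<bar> < d1 \<longrightarrow> norm (f y - f t) \<le> \<epsilon>"
    using RD_R[OF f t(1-3) t(4)] by blast
  show "\<exists>\<delta>>0. \<forall>y\<in>T. a \<le> y \<longrightarrow> \<bar>y - t\<bar> < \<delta> \<longrightarrow> norm (norm (f y) - norm (f t)) \<le> \<epsilon>"
    using d1 norm_triangle_ineq3[of "f _" "f t"] by (intro exI[of _ d1]) (auto intro: order.trans)
next
  fix t \<epsilon> :: real assume t: "t \<in> T" "a < t" "ldense T t" "\<epsilon> > 0"
  obtain d1 L1 where d1: "d1 > 0" "\<forall>y\<in>T. a \<le> y \<longrightarrow> t - d1 < y \<longrightarrow> y < t \<longrightarrow> norm (f y - L1) \<le> \<epsilon>"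
    using RD_L[OF f t(1-3) t(4)] by blast
  show "\<exists>\<delta>>0. \<exists>L. \<forall>y\<in>T. a \<le> y \<longrightarrow> t - \<delta> < y \<longrightarrow> y < t \<longrightarrow> norm (norm (f y) - L) \<le> \<epsilon>"
    using d1 norm_triangle_ineq3[of "f _" L1]
    by (intro exI[of _ d1] conjI exI[of _ "norm L1"]) (auto intro: order.trans)
qed

lemma prod_close:
  fixes x y L1 L2 :: real
  assumes "\<bar>x - L1\<bar> \<le> e1" "\<bar>y - L2\<bar> \<le> e2" "e1 \<le> 1" "e1 \<ge> 0" "e2 \<ge> 0"
  shows "\<bar>x * y - L1 * L2\<bar> \<le> (\<bar>L1\<bar> + 1) * e2 + \<bar>L2\<bar> * e1"
proof -
  have "x * y - L1 * L2 = x * (y - L2) + L2 * (x - L1)" by (simp add: algebra_simps)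
  then have "\<bar>x * y - L1 * L2\<bar> \<le> \<bar>x\<bar> * \<bar>y - L2\<bar> + \<bar>L2\<bar> * \<bar>x - L1\<bar>"
    by (metis abs_mult abs_triangle_ineq)
  moreover have "\<bar>x\<bar> \<le> \<bar>L1\<bar> + 1" using assms by linarith
  moreover have "\<bar>x\<bar> * \<bar>y - L2\<bar> \<le> (\<bar>L1\<bar> + 1) * e2"
    using assms calculation(2) by (intro mult_mono) auto
  moreover have "\<bar>L2\<bar> * \<bar>x - L1\<bar> \<le> \<bar>L2\<bar> * e1" using assms by (intro mult_left_mono) auto
  ultimately show ?thesis by linarith
qed

lemma eps_split0:
  fixes A B \<epsilon> e :: real
  assumes "\<epsilon> > 0" "A \<ge> 0" "B \<ge> 0" "e > 0" "e \<le> \<epsilon> / (2 * (A + B + 1))"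
  shows "A * e + B * e \<le> \<epsilon>"
proof -
  have "e * (2 * (A + B + 1)) \<le> \<epsilon>" using assms by (simp add: le_divide_eq)
  then have "2 * (A * e) + 2 * (B * e) + 2 * e \<le> \<epsilon>" by (simp add: algebra_simps)
  moreover have "A * e \<ge> 0" "B * e \<ge> 0" using assms by auto
  ultimately show ?thesis using assms by linarith
qed

lemma eps_split:
  fixes A B \<epsilon> :: real
  assumes "\<epsilon> > 0" "A \<ge> 0" "B \<ge> 0"
  shows "min 1 (\<epsilon> / (2 * (A + B + 1))) > 0" "min 1 (\<epsilon> / (2 * (A + B + 1))) \<le> 1"
    "A * min 1 (\<epsilon> / (2 * (A + B + 1))) + B * min 1 (\<epsilon> / (2 * (A + B + 1))) \<le> \<epsilon>"
proof -
  show 1: "min 1 (\<epsilon> / (2 * (A + B + 1))) > 0" "min 1 (\<epsilon> / (2 * (A + B + 1))) \<le> 1" using assms by auto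
  show "A * min 1 (\<epsilon> / (2 * (A + B + 1))) + B * min 1 (\<epsilon> / (2 * (A + B + 1))) \<le> \<epsilon>"
    by (rule eps_split0[OF assms 1(1)]) simp
qed

lemma RD_mult:
  fixes f g :: "real \<Rightarrow> real"
  assumes f: "RD T a f" and g: "RD T a g"
  shows "RD T a (\<lambda>s. f s * g s)"
  unfolding RD_def
proof (intro conjI ballI impI allI)
  fix t \<epsilon> :: real assume t: "t \<in> T" "a \<le> t" "sigma T t = t" "\<epsilon> > 0"
  define e where "e = min 1 (\<epsilon> / (2 * ((\<bar>f t\<bar> + 1) + \<bar>g t\<bar> + 1)))"
  have e: "e > 0" "e \<le> 1" "(\<bar>f t\<bar> + 1) * e + \<bar>g t\<bar> * e \<le> \<epsilon>"
    unfolding e_def by (rule eps_split[OF t(4)]; simp)+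
  obtain d1 where d1: "d1 > 0" "\<forall>y\<in>T. a \<le> y \<longrightarrow> \<bar>y - t\<bar> < d1 \<longrightarrow> norm (f y - f t) \<le> e"
    using RD_R[OF f t(1-3) e(1)] by blast
  obtain d2 where d2: "d2 > 0" "\<forall>y\<in>T. a \<le> y \<longrightarrow> \<bar>y - t\<bar> < d2 \<longrightarrow> norm (g y - g t) \<le> e"
    using RD_R[OF g t(1-3) e(1)] by blast
  show "\<exists>\<delta>>0. \<forall>y\<in>T. a \<le> y \<longrightarrow> \<bar>y - t\<bar> < \<delta> \<longrightarrow> norm (f y * g y - f t * g t) \<le> \<epsilon>"
  proof (intro exI[of _ "min d1 d2"] conjI ballI impI)
    fix y assume y: "y \<in> T" "a \<le> y" "\<bar>y - t\<bar> < min d1 d2"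
    then have fg: "\<bar>f y - f t\<bar> \<le> e" "\<bar>g y - g t\<bar> \<le> e" using d1 d2 by auto
    have "\<bar>f y * g y - f t * g t\<bar> \<le> (\<bar>f t\<bar> + 1) * e + \<bar>g t\<bar> * e"
      by (rule prod_close[OF fg e(2)]) (use e in auto)
    then show "norm (f y * g y - f t * g t) \<le> \<epsilon>" using e(3) by simp
  qed (use d1 d2 in auto)
next
  fix t \<epsilon> :: real assume t: "t \<in> T" "a < t" "ldense T t" "\<epsilon> > 0"
  obtain d1 L1 where d1: "d1 > 0" "\<forall>y\<in>T. a \<le> y \<longrightarrow> t - d1 < y \<longrightarrow> y < t \<longrightarrow> norm (f y - L1) \<le> 1"
    using RD_L[OF f t(1-3), of 1] by auto
  obtain d2 L2 where d2: "d2 > 0" "\<forall>y\<in>T. a \<le> y \<longrightarrow> t - d2 < y \<longrightarrow> y < t \<longrightarrow> norm (g y - L2) \<le> 1"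
    using RD_L[OF g t(1-3), of 1] by auto
  define e where "e = min 1 (\<epsilon> / (2 * ((\<bar>L1\<bar> + 3) + (\<bar>L2\<bar> + 2) + 1)))"
  have e: "e > 0" "e \<le> 1" "(\<bar>L1\<bar> + 3) * e + (\<bar>L2\<bar> + 2) * e \<le> \<epsilon>"
    unfolding e_def by (rule eps_split[OF t(4)]; simp)+
  obtain d3 L3 where d3: "d3 > 0" "\<forall>y\<in>T. a \<le> y \<longrightarrow> t - d3 < y \<longrightarrow> y < t \<longrightarrow> norm (f y - L3) \<le> e"
    using RD_L[OF f t(1-3) e(1)] by blast
  obtain d4 L4 where d4: "d4 > 0" "\<forall>y\<in>T. a \<le> y \<longrightarrow> t - d4 < y \<longrightarrow> y < t \<longrightarrow> norm (g y - L4) \<le> e"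
    using RD_L[OF g t(1-3) e(1)] by blast
  define d where "d = min (min d1 d2) (min (min d3 d4) (t - a))"
  have dp: "d > 0" "d \<le> d1" "d \<le> d2" "d \<le> d3" "d \<le> d4" "d \<le> t - a"
    using d1 d2 d3 d4 t(2) unfolding d_def by auto
  obtain y0 where y0: "y0 \<in> T" "t - d < y0" "y0 < t"
    using t(3) dp(1) unfolding ldense_def by blast
  have L3b: "\<bar>L3\<bar> + 1 \<le> \<bar>L1\<bar> + 3"
  proof -
    have "\<bar>f y0 - L1\<bar> \<le> 1" "\<bar>f y0 - L3\<bar> \<le> e" using d1 d3 y0 dp by auto
    then show ?thesis using e by linarith
  qed
  have L4b: "\<bar>L4\<bar> \<le> \<bar>L2\<bar> + 2"
  proof -
    have "\<bar>g y0 - L2\<bar> \<le> 1" "\<bar>g y0 - L4\<bar> \<le> e" using d2 d4 y0 dp by auto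
    then show ?thesis using e by linarith
  qed
  have "\<forall>y\<in>T. a \<le> y \<longrightarrow> t - d < y \<longrightarrow> y < t \<longrightarrow> norm (f y * g y - L3 * L4) \<le> \<epsilon>"
  proof (intro ballI impI)
    fix y assume y: "y \<in> T" "a \<le> y" "t - d < y" "y < t"
    then have fg: "\<bar>f y - L3\<bar> \<le> e" "\<bar>g y - L4\<bar> \<le> e" using d3 d4 dp by auto
    have "\<bar>f y * g y - L3 * L4\<bar> \<le> (\<bar>L3\<bar> + 1) * e + \<bar>L4\<bar> * e"
      by (rule prod_close[OF fg e(2)]) (use e in auto)
    moreover have "(\<bar>L3\<bar> + 1) * e \<le> (\<bar>L1\<bar> + 3) * e" using L3b e by (intro mult_right_mono) auto
    moreover have "\<bar>L4\<bar> * e \<le> (\<bar>L2\<bar> + 2) * e" using L4b e by (intro mult_right_mono) auto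
    ultimately show "norm (f y * g y - L3 * L4) \<le> \<epsilon>" using e(3) by simp
  qed
  then show "\<exists>\<delta>>0. \<exists>L. \<forall>y\<in>T. a \<le> y \<longrightarrow> t - \<delta> < y \<longrightarrow> y < t \<longrightarrow> norm (f y * g y - L) \<le> \<epsilon>"
    using dp(1) by blast
qed




lemma half_frac:
  fixes K \<epsilon> :: real
  assumes "K \<ge> 0" "\<epsilon> > 0" shows "K * (\<epsilon> / (2 * (K + 1))) \<le> \<epsilon> / 2"
proof -
  have "K * (\<epsilon> / (2 * (K + 1))) = (\<epsilon> / 2) * (K / (K + 1))" by (simp add: field_simps)
  also have "\<dots> \<le> \<epsilon> / 2" by (rule mult_left_le) (use assms in auto)
  finally show ?thesis .
qed

lemma RD_comp_lip:
  fixes x :: "real \<Rightarrow> 'a::real_normed_vector" and k :: "real \<Rightarrow> 'a \<Rightarrow> 'b::real_normed_vector"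
  assumes RDx: "RD T a x" and RDk: "\<And>v. RD T a (\<lambda>s. k s v)"
    and Lip: "\<And>t. \<exists>K\<ge>0. \<forall>s\<in>T. a \<le> s \<longrightarrow> s < t + 1 \<longrightarrow> (\<forall>v v'. norm (k s v - k s v') \<le> K * norm (v - v'))"
  shows "RD T a (\<lambda>s. k s (x s))"
  unfolding RD_def
proof (intro conjI ballI impI allI)
  fix t \<epsilon> :: real assume t: "t \<in> T" "a \<le> t" "sigma T t = t" "\<epsilon> > 0"
  obtain K where K: "K \<ge> 0" "\<forall>s\<in>T. a \<le> s \<longrightarrow> s < t + 1 \<longrightarrow> (\<forall>v v'. norm (k s v - k s v') \<le> K * norm (v - v'))"
    using Lip[of t] by blast
  define e1 where "e1 = \<epsilon> / (2 * (K + 1))"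
  have e1: "e1 > 0" "K * e1 \<le> \<epsilon>/2" using K t(4) half_frac unfolding e1_def by auto
  obtain dx where dx: "dx > 0" "\<forall>y\<in>T. a \<le> y \<longrightarrow> \<bar>y - t\<bar> < dx \<longrightarrow> norm (x y - x t) \<le> e1"
    using RD_R[OF RDx t(1-3) e1(1)] by blast
  have "\<epsilon>/2 > 0" using t by simp
  then obtain dk where dk: "dk > 0" "\<forall>y\<in>T. a \<le> y \<longrightarrow> \<bar>y - t\<bar> < dk \<longrightarrow> norm (k y (x t) - k t (x t)) \<le> \<epsilon>/2"
    using RD_R[OF RDk t(1-3)] by blast
  have "\<forall>y\<in>T. a \<le> y \<longrightarrow> \<bar>y - t\<bar> < min (min dx dk) 1 \<longrightarrow> norm (k y (x y) - k t (x t)) \<le> \<epsilon>"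
  proof (intro ballI impI)
    fix y assume y: "y \<in> T" "a \<le> y" "\<bar>y - t\<bar> < min (min dx dk) 1"
    have "norm (k y (x y) - k y (x t)) \<le> K * norm (x y - x t)" using K y by auto
    also have "\<dots> \<le> K * e1" using dx y K by (intro mult_left_mono) auto
    finally have 1: "norm (k y (x y) - k y (x t)) \<le> \<epsilon>/2" using e1 by linarith
    have 2: "norm (k y (x t) - k t (x t)) \<le> \<epsilon>/2" using dk y by auto
    show "norm (k y (x y) - k t (x t)) \<le> \<epsilon>" using norm_diff_triangle_le[OF 1 2] by simp
  qed
  then show "\<exists>\<delta>>0. \<forall>y\<in>T. a \<le> y \<longrightarrow> \<bar>y - t\<bar> < \<delta> \<longrightarrow> norm (k y (x y) - k t (x t)) \<le> \<epsilon>"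
    using dx dk by (intro exI[of _ "min (min dx dk) 1"]) auto
next
  fix t \<epsilon> :: real assume t: "t \<in> T" "a < t" "ldense T t" "\<epsilon> > 0"
  obtain K where K: "K \<ge> 0" "\<forall>s\<in>T. a \<le> s \<longrightarrow> s < t + 1 \<longrightarrow> (\<forall>v v'. norm (k s v - k s v') \<le> K * norm (v - v'))"
    using Lip[of t] by blast
  define e1 where "e1 = \<epsilon> / (2 * (K + 1))"
  have e1: "e1 > 0" "K * e1 \<le> \<epsilon>/2" using K t(4) half_frac unfolding e1_def by auto
  obtain dx Lx where dx: "dx > 0" "\<forall>y\<in>T. a \<le> y \<longrightarrow> t - dx < y \<longrightarrow> y < t \<longrightarrow> norm (x y - Lx) \<le> e1"
    using RD_L[OF RDx t(1-3) e1(1)] by blast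
  have "\<epsilon>/2 > 0" using t by simp
  then obtain dk Lk where dk: "dk > 0" "\<forall>y\<in>T. a \<le> y \<longrightarrow> t - dk < y \<longrightarrow> y < t \<longrightarrow> norm (k y Lx - Lk) \<le> \<epsilon>/2"
    using RD_L[OF RDk t(1-3)] by blast
  have "\<forall>y\<in>T. a \<le> y \<longrightarrow> t - min dx dk < y \<longrightarrow> y < t \<longrightarrow> norm (k y (x y) - Lk) \<le> \<epsilon>"
  proof (intro ballI impI)
    fix y assume y: "y \<in> T" "a \<le> y" "t - min dx dk < y" "y < t"
    have "norm (k y (x y) - k y Lx) \<le> K * norm (x y - Lx)" using K y by auto
    also have "\<dots> \<le> K * e1" using dx y K by (intro mult_left_mono) auto
    finally have 1: "norm (k y (x y) - k y Lx) \<le> \<epsilon>/2" using e1 by linarith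
    have 2: "norm (k y Lx - Lk) \<le> \<epsilon>/2" using dk y by auto
    show "norm (k y (x y) - Lk) \<le> \<epsilon>" using norm_diff_triangle_le[OF 1 2] by simp
  qed
  then show "\<exists>\<delta>>0. \<exists>L. \<forall>y\<in>T. a \<le> y \<longrightarrow> t - \<delta> < y \<longrightarrow> y < t \<longrightarrow> norm (k y (x y) - L) \<le> \<epsilon>"
    using dx dk by (intro exI[of _ "min dx dk"] conjI exI[of _ Lk]) auto
qed

lemma mu_nonneg: "mu T t \<ge> 0"
  unfolding mu_def using sigma_ge[where T=T and t=t] by simp

lemma xi_bounds:
  assumes "0 \<le> m" "0 \<le> p"
  shows "0 \<le> xi m p" "xi m p \<le> p"
proof -
  show "0 \<le> xi m p" using assms unfolding xi_def by auto
  show "xi m p \<le> p"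
  proof (cases "m = 0")
    case False
    then have "m > 0" using assms by simp
    have "ln (1 + m * p) \<le> m * p" using assms by (intro ln_add_one_self_le_self) simp
    then show ?thesis using \<open>m > 0\<close> unfolding xi_def by (simp add: divide_le_eq mult.commute)
  qed (simp add: xi_def)
qed

lemma xi_close:
  assumes "0 \<le> m" "0 \<le> p" "m * p \<le> 1"
  shows "\<bar>xi m p - p\<bar> \<le> m * p\<^sup>2"
proof (cases "m = 0")
  case False
  then have m: "m > 0" using assms by simp
  have "m * p - (m * p)\<^sup>2 \<le> ln (1 + m * p)" using assms by (intro ln_one_plus_pos_lower_bound) auto
  then have "(m * p - (m * p)\<^sup>2) / m \<le> xi m p" using m unfolding xi_def by (simp add: divide_right_mono)
  moreover have "(m * p - (m * p)\<^sup>2) / m = p - m * p\<^sup>2" using m by (simp add: field_simps power2_eq_square)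
  ultimately have "p - m * p\<^sup>2 \<le> xi m p" by simp
  moreover have "xi m p \<le> p" using xi_bounds assms by auto
  ultimately show ?thesis by auto
qed (simp add: xi_def)

lemma xi_small:
  assumes "0 \<le> m" "0 \<le> p" "\<epsilon> > 0" "m \<le> min (1 / (p + 1)) (\<epsilon> / (p\<^sup>2 + 1))"
  shows "\<bar>xi m p - p\<bar> \<le> \<epsilon>"
proof -
  have "m * (p + 1) \<le> 1" using assms by (simp add: le_divide_eq add_nonneg_pos)
  then have mp: "m * p \<le> 1" using assms by (simp add: algebra_simps)
  have "m * (p\<^sup>2 + 1) \<le> \<epsilon>" using assms by (simp add: le_divide_eq add_nonneg_pos)
  then have "m * p\<^sup>2 \<le> \<epsilon>" using assms by (simp add: algebra_simps)
  then show ?thesis using xi_close[OF assms(1,2) mp] by linarith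
qed

lemma exp_mu_xi:
  assumes "m > 0" "0 \<le> p" shows "exp (m * xi m p) = 1 + m * p"
proof -
  have "m * p \<ge> 0" using assms by simp
  then have "1 + m * p > 0" by linarith
  then show ?thesis using assms unfolding xi_def by simp
qed

lemma xi_ominus:
  assumes "0 \<le> m" "0 \<le> p" "0 < \<alpha>"
  shows "xi m ((p - \<alpha>) / (1 + m * \<alpha>)) = xi m p - xi m \<alpha>"
proof (cases "m = 0")
  case False
  then have m: "m > 0" using assms by simp
  have "m * \<alpha> \<ge> 0" "m * p \<ge> 0" using m assms by auto
  then have d: "1 + m * \<alpha> > 0" "1 + m * p > 0" by linarith+
  have "1 + m * ((p - \<alpha>) / (1 + m * \<alpha>)) = (1 + m * p) / (1 + m * \<alpha>)"
    using d by (simp add: field_simps)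
  then have "ln (1 + m * ((p - \<alpha>) / (1 + m * \<alpha>))) = ln (1 + m * p) - ln (1 + m * \<alpha>)"
    using d by (simp add: ln_div)
  then show ?thesis using m unfolding xi_def by (simp add: diff_divide_distrib)
qed (simp add: xi_def)

lemma mu_near:
  assumes tT: "t \<in> T" and st: "sigma T t = t" and c: "c > 0"
  shows "\<exists>\<delta>>0. \<forall>y\<in>T. \<bar>y - t\<bar> < \<delta> \<longrightarrow> mu T y \<le> c"
proof -
  have below: "mu T y \<le> t - y" if "y \<in> T" "y < t" for y
    using sigma_le[OF tT that(2)] unfolding mu_def by simp
  have mut: "mu T t = 0" using st unfolding mu_def by simp
  show ?thesis
  proof (cases "\<exists>y0\<in>T. t < y0 \<and> y0 < t + c \<and> mu T y0 > c")
    case True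
    then obtain y0 where y0: "y0 \<in> T" "t < y0" "y0 < t + c" by blast
    have "\<forall>y\<in>T. \<bar>y - t\<bar> < min c (y0 - t) \<longrightarrow> mu T y \<le> c"
    proof (intro ballI impI)
      fix y assume y: "y \<in> T" "\<bar>y - t\<bar> < min c (y0 - t)"
      consider "y < t" | "y = t" | "t < y" by linarith
      then show "mu T y \<le> c"
      proof cases
        case 1 then show ?thesis using below y by force
      next
        case 2 then show ?thesis using mut c by simp
      next
        case 3
        then have "y < y0" using y by auto
        then have "sigma T y \<le> y0" using sigma_le[OF y0(1)] by auto
        then show ?thesis using 3 y0 unfolding mu_def by auto
      qed
    qed
    then show ?thesis using y0 c by (intro exI[of _ "min c (y0 - t)"]) auto
  next
    case False
    have "\<forall>y\<in>T. \<bar>y - t\<bar> < c \<longrightarrow> mu T y \<le> c"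
    proof (intro ballI impI)
      fix y assume y: "y \<in> T" "\<bar>y - t\<bar> < c"
      consider "y < t" | "y = t" | "t < y" by linarith
      then show "mu T y \<le> c"
      proof cases
        case 1 then show ?thesis using below y by force
      next
        case 2 then show ?thesis using mut c by simp
      next
        case 3 then show ?thesis using False y by force
      qed
    qed
    then show ?thesis using c by blast
  qed
qed

lemma RD_xi:
  assumes p: "p \<ge> 0"
  shows "RD T a (\<lambda>\<tau>. xi (mu T \<tau>) p)"
  unfolding RD_def
proof (intro conjI ballI impI allI)
  fix t \<epsilon> :: real assume t: "t \<in> T" "a \<le> t" "sigma T t = t" "\<epsilon> > 0"
  define c where "c = min (1 / (p + 1)) (\<epsilon> / (p\<^sup>2 + 1))"
  have c: "c > 0" using t p unfolding c_def by (auto simp: add_nonneg_pos)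
  obtain \<delta> where d: "\<delta> > 0" "\<forall>y\<in>T. \<bar>y - t\<bar> < \<delta> \<longrightarrow> mu T y \<le> c" using mu_near[OF t(1) t(3) c] by blast
  have mut: "mu T t = 0" using t(3) unfolding mu_def by simp
  show "\<exists>\<delta>>0. \<forall>y\<in>T. a \<le> y \<longrightarrow> \<bar>y - t\<bar> < \<delta> \<longrightarrow> norm (xi (mu T y) p - xi (mu T t) p) \<le> \<epsilon>"
    using d xi_small[OF mu_nonneg p t(4)] mut unfolding c_def
    by (intro exI[of _ \<delta>]) (auto simp: xi_def)
next
  fix t \<epsilon> :: real assume t: "t \<in> T" "a < t" "ldense T t" "\<epsilon> > 0"
  define c where "c = min (1 / (p + 1)) (\<epsilon> / (p\<^sup>2 + 1))"
  have c: "c > 0" using t p unfolding c_def by (auto simp: add_nonneg_pos)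
  have "\<forall>y\<in>T. a \<le> y \<longrightarrow> t - c < y \<longrightarrow> y < t \<longrightarrow> norm (xi (mu T y) p - p) \<le> \<epsilon>"
  proof (intro ballI impI)
    fix y assume y: "y \<in> T" "a \<le> y" "t - c < y" "y < t"
    have "mu T y \<le> t - y" using sigma_le[OF t(1) y(4)] unfolding mu_def by simp
    then have "mu T y \<le> c" using y by simp
    then show "norm (xi (mu T y) p - p) \<le> \<epsilon>" using xi_small[OF mu_nonneg p t(4)] unfolding c_def by auto
  qed
  then show "\<exists>\<delta>>0. \<exists>L. \<forall>y\<in>T. a \<le> y \<longrightarrow> t - \<delta> < y \<longrightarrow> y < t \<longrightarrow> norm (xi (mu T y) p - L) \<le> \<epsilon>"
    using c by blast
qed




lemma ext_int_rs:
  fixes f :: "real \<Rightarrow> 'a::banach"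
  assumes cl: "closed T" and aT: "a \<in> T" and tT: "t \<in> T" and at: "a \<le> t" and rs: "t < sigma T t"
  shows "integral {t..sigma T t} (ext T a f) = (sigma T t - t) *\<^sub>R f t"
proof -
  have "integral {t..sigma T t} (ext T a f) = integral {t..sigma T t} (\<lambda>x. f t)"
  proof (rule integral_spike[of "{sigma T t}"])
    fix x assume x: "x \<in> {t..sigma T t} - {sigma T t}"
    have "tfl T x = tfl T t"
      by (rule tfl_const) (use x sigma_gap in fastforce)+
    then show "f t = ext T a f x" using x at tfl_self[OF cl tT] unfolding ext_def by auto
  qed auto
  also have "\<dots> = (sigma T t - t) *\<^sub>R f t" using rs by (simp add: content_real)
  finally show ?thesis .
qed

lemma int_split:
  fixes f :: "real \<Rightarrow> 'a::banach"
  assumes cl: "closed T" and aT: "a \<in> T" and RD: "RD T a f" and "a \<le> s" "s \<le> y"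
  shows "integral {a..y} (ext T a f) = integral {a..s} (ext T a f) + integral {s..y} (ext T a f)"
  using Henstock_Kurzweil_Integration.integral_combine[OF assms(4,5) ext_integrable[OF cl aT RD]] by simp

lemma gronwall_step_alg:
  fixes Vs Es p \<eta> h \<epsilon> Vy Ey us :: real
  assumes Vs: "Vs \<ge> 0" and Es: "Es > 0" and p: "p \<ge> 0" and eta: "0 < \<eta>" "\<eta> \<le> 1"
    and etab: "\<eta> * (p + Vs) \<le> \<epsilon> * Es / 2" and h: "0 \<le> h" "h \<le> 1/2" and ep: "\<epsilon> > 0"
    and us: "us \<le> Vs"
    and Vy: "Vy \<le> Vs + p * (h * (us + \<eta>))" and Vy0: "Vy \<ge> 0"
    and Ey: "Es * (1 + h * (p - \<eta>)) \<le> Ey"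
  shows "Vy / Ey \<le> Vs / Es + \<epsilon> * h"
proof -
  have q: "1 + h * (p - \<eta>) \<ge> 1/2"
  proof -
    have "h * \<eta> \<le> 1/2 * 1" using h eta by (intro mult_mono) auto
    moreover have "h * p \<ge> 0" using h p by simp
    ultimately show ?thesis by (simp add: algebra_simps)
  qed
  have "Es * (1 + h * (p - \<eta>)) > 0" using Es q by simp
  then have Eypos: "Ey > 0" using Ey by linarith
  have V1: "Vy \<le> Vs * (1 + p * h) + p * h * \<eta>"
  proof -
    have "p * (h * us) \<le> p * (h * Vs)" using us p h by (intro mult_left_mono) auto
    then show ?thesis using Vy by (simp add: algebra_simps)
  qed
  have key: "h * (\<eta> * (p + Vs)) \<le> h * (\<epsilon> * Es / 2)" using etab h by (intro mult_left_mono) auto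
  have "\<epsilon> * h * Es * (1/2) \<le> \<epsilon> * h * Es * (1 + h * (p - \<eta>))"
    using q ep h Es by (intro mult_left_mono) auto
  then have "Vy \<le> (Vs / Es + \<epsilon> * h) * (Es * (1 + h * (p - \<eta>)))"
    using V1 key Es by (simp add: algebra_simps)
  also have "\<dots> \<le> (Vs / Es + \<epsilon> * h) * Ey"
    using Ey Vs Es ep h by (intro mult_left_mono) auto
  finally show ?thesis using Eypos by (simp add: divide_le_eq)
qed

lemma gronwall:
  fixes u :: "real \<Rightarrow> real"
  assumes cl: "closed T" and aT: "a \<in> T" and p: "p \<ge> 0" and c: "c \<ge> 0"
    and RDu: "RD T a u" and u0: "\<And>s. s \<in> T \<Longrightarrow> a \<le> s \<Longrightarrow> u s \<ge> 0"
    and ineq: "\<And>s. s \<in> T \<Longrightarrow> a \<le> s \<Longrightarrow> u s \<le> c + p * integral {a..s} (ext T a u)"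
    and bT: "b \<in> T" "a \<le> b"
  shows "u b \<le> c * exp (integral {a..b} (ext T a (\<lambda>\<tau>. xi (mu T \<tau>) p)))"
proof -
  define \<xi> where "\<xi> = (\<lambda>\<tau>. xi (mu T \<tau>) p)"
  have RDxi: "RD T a \<xi>" unfolding \<xi>_def by (rule RD_xi[OF p])
  define V where "V r = c + p * integral {a..r} (ext T a u)" for r
  define X where "X r = integral {a..r} (ext T a \<xi>)" for r
  define Z where "Z r = V r / exp (X r)" for r
  have iu: "ext T a u integrable_on {lo..hi}" for lo hi by (rule ext_integrable[OF cl aT RDu])
  have ix: "ext T a \<xi> integrable_on {lo..hi}" for lo hi by (rule ext_integrable[OF cl aT RDxi])
  have extu0: "ext T a u x \<ge> 0" if "a \<le> x" for x
    using u0 tfl_props[OF cl aT that] that unfolding ext_def by auto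
  have Vge: "V s \<ge> u s" if "s \<in> T" "a \<le> s" for s using ineq[OF that] unfolding V_def by simp
  have V0: "V s \<ge> 0" if "s \<in> T" "a \<le> s" for s using Vge[OF that] u0[OF that] by linarith
  have key: "Z b \<le> c + \<epsilon> * (b - a)" if ep: "\<epsilon> > 0" for \<epsilon>
  proof (rule ts_induct[OF cl aT bT(1) bT(2), where P="\<lambda>s. Z s \<le> c + \<epsilon> * (s - a)"])
    show "Z a \<le> c + \<epsilon> * (a - a)" unfolding Z_def V_def X_def by simp
  next
    fix s assume s: "s \<in> T" "a \<le> s" "s < b" "s < sigma T s" and Ps: "Z s \<le> c + \<epsilon> * (s - a)"
    define \<mu> where "\<mu> = sigma T s - s"
    have mu: "\<mu> > 0" "mu T s = \<mu>" using s unfolding \<mu>_def mu_def by auto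
    have Iu: "integral {a..sigma T s} (ext T a u) = integral {a..s} (ext T a u) + \<mu> * u s"
      using int_split[OF cl aT RDu s(2), of "sigma T s"] ext_int_rs[OF cl aT s(1) s(2) s(4), of u] s
      unfolding \<mu>_def by simp
    have Vs: "V (sigma T s) = V s + p * (\<mu> * u s)"
      unfolding V_def Iu by (simp add: algebra_simps)
    have Xs: "X (sigma T s) = X s + \<mu> * xi \<mu> p"
      using int_split[OF cl aT RDxi s(2), of "sigma T s"] ext_int_rs[OF cl aT s(1) s(2) s(4), of \<xi>] s mu
      unfolding X_def \<mu>_def \<xi>_def by simp
    have Es: "exp (X (sigma T s)) = exp (X s) * (1 + \<mu> * p)"
      using Xs exp_mu_xi[OF mu(1) p] by (simp add: exp_add)
    have "V (sigma T s) \<le> V s * (1 + \<mu> * p)"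
    proof -
      have "p * (\<mu> * u s) \<le> p * (\<mu> * V s)" using Vge[OF s(1,2)] p mu by (intro mult_left_mono) auto
      then show ?thesis using Vs by (simp add: algebra_simps)
    qed
    moreover have "1 + \<mu> * p > 0"
    proof -
      have "\<mu> * p \<ge> 0" using mu p by simp
      then show ?thesis by linarith
    qed
    ultimately have "Z (sigma T s) \<le> Z s"
    proof -
      assume A: "V (sigma T s) \<le> V s * (1 + \<mu> * p)" and q: "1 + \<mu> * p > 0"
      have "V (sigma T s) / (exp (X s) * (1 + \<mu> * p)) \<le> (V s * (1 + \<mu> * p)) / (exp (X s) * (1 + \<mu> * p))"
        using A q by (intro divide_right_mono) auto
      also have "\<dots> = V s / exp (X s)" using q by simp
      finally show ?thesis unfolding Z_def Es .
    qed
    moreover have "\<epsilon> * (s - a) \<le> \<epsilon> * (sigma T s - a)" using ep s by auto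
    ultimately show "Z (sigma T s) \<le> c + \<epsilon> * (sigma T s - a)" using Ps by linarith
  next
    fix s assume s: "s \<in> T" "a \<le> s" "s < b" "sigma T s = s" and Ps: "Z s \<le> c + \<epsilon> * (s - a)"
    define Es where "Es = exp (X s)"
    have Esp: "Es > 0" unfolding Es_def by simp
    have Vs0: "V s \<ge> 0" using V0[OF s(1,2)] .
    define \<eta> where "\<eta> = min 1 (\<epsilon> * Es / (2 * (p + V s + 1)))"
    have eta: "\<eta> > 0" "\<eta> \<le> 1" using ep Esp Vs0 p unfolding \<eta>_def by auto
    have etab: "\<eta> * (p + V s) \<le> \<epsilon> * Es / 2"
    proof -
      have "\<eta> \<le> \<epsilon> * Es / (2 * (p + V s + 1))" unfolding \<eta>_def by simp
      then have "\<eta> * (2 * (p + V s + 1)) \<le> \<epsilon> * Es" using p Vs0 by (simp add: le_divide_eq)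
      moreover have "\<eta> * (p + V s) \<le> \<eta> * (p + V s + 1)" using eta by simp
      ultimately show ?thesis by (simp add: algebra_simps)
    qed
    obtain d1 where d1: "d1 > 0" "\<forall>y\<in>T. a \<le> y \<longrightarrow> \<bar>y - s\<bar> < d1 \<longrightarrow> norm (u y - u s) \<le> \<eta>"
      using RD_R[OF RDu s(1,2,4) eta(1)] by blast
    define c' where "c' = min (1 / (p + 1)) (\<eta> / (p\<^sup>2 + 1))"
    have c': "c' > 0" using eta p unfolding c'_def by (auto simp: add_nonneg_pos)
    obtain d2 where d2: "d2 > 0" "\<forall>y\<in>T. \<bar>y - s\<bar> < d2 \<longrightarrow> mu T y \<le> c'"
      using mu_near[OF s(1,4) c'] by blast
    have xiy: "\<bar>\<xi> y - p\<bar> \<le> \<eta>" if "y \<in> T" "\<bar>y - s\<bar> < d2" for y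
      using xi_small[OF mu_nonneg p eta(1)] d2 that unfolding \<xi>_def c'_def by auto
    define \<delta> where "\<delta> = min (min d1 d2) (1/2)"
    have dp: "\<delta> > 0" "\<delta> \<le> d1" "\<delta> \<le> d2" "\<delta> \<le> 1/2" using d1 d2 unfolding \<delta>_def by auto
    have "\<forall>y\<in>T. s < y \<and> y < s + \<delta> \<longrightarrow> Z y \<le> c + \<epsilon> * (y - a)"
    proof (intro ballI impI)
      fix y assume yT: "y \<in> T" and y: "s < y \<and> y < s + \<delta>"
      define h where "h = y - s"
      have h: "0 \<le> h" "h \<le> 1/2" using y dp unfolding h_def by auto
      have tflx: "tfl T x \<in> T" "s \<le> tfl T x" "tfl T x \<le> x" "a \<le> tfl T x" if "x \<in> {s..y}" for x
        using tfl_props[OF cl aT, of x] tfl_upper[OF s(1), of x] that s by auto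
      have I1: "\<bar>integral {s..y} (ext T a u) - h * u s\<bar> \<le> \<eta> * h"
      proof -
        have "norm (integral {s..y} (ext T a u) - (y - s) *\<^sub>R u s) \<le> \<eta> * (y - s)"
        proof (rule int_near_const[OF _ iu])
          show "s \<le> y" using y by simp
          fix x assume x: "x \<in> {s..y}"
          have "\<bar>tfl T x - s\<bar> < d1" using tflx[OF x] x y dp by auto
          then show "norm (ext T a u x - u s) \<le> \<eta>" using d1 tflx[OF x] x s unfolding ext_def by auto
        qed
        then show ?thesis unfolding h_def by simp
      qed
      have I2: "\<bar>integral {s..y} (ext T a \<xi>) - h * p\<bar> \<le> \<eta> * h"
      proof -
        have "norm (integral {s..y} (ext T a \<xi>) - (y - s) *\<^sub>R p) \<le> \<eta> * (y - s)"
        proof (rule int_near_const[OF _ ix])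
          show "s \<le> y" using y by simp
          fix x assume x: "x \<in> {s..y}"
          have "\<bar>tfl T x - s\<bar> < d2" using tflx[OF x] x y dp by auto
          then show "norm (ext T a \<xi> x - p) \<le> \<eta>" using xiy tflx[OF x] x s unfolding ext_def by auto
        qed
        then show ?thesis unfolding h_def by simp
      qed
      have Vy: "V y = V s + p * integral {s..y} (ext T a u)"
        using int_split[OF cl aT RDu s(2), of y] y unfolding V_def by (simp add: algebra_simps)
      have Xy: "X y = X s + integral {s..y} (ext T a \<xi>)"
        using int_split[OF cl aT RDxi s(2), of y] y unfolding X_def by simp
      have Vyb: "V y \<le> V s + p * (h * (u s + \<eta>))"
      proof -
        have "integral {s..y} (ext T a u) \<le> h * (u s + \<eta>)" using I1 by (simp add: algebra_simps)
        then show ?thesis using Vy p by (simp add: mult_left_mono)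
      qed
      have Eyb: "Es * (1 + h * (p - \<eta>)) \<le> exp (X y)"
      proof -
        have "h * (p - \<eta>) \<le> integral {s..y} (ext T a \<xi>)" using I2 by (simp add: algebra_simps)
        then have "1 + h * (p - \<eta>) \<le> exp (integral {s..y} (ext T a \<xi>))"
          using exp_ge_add_one_self[of "h * (p - \<eta>)"] by (meson exp_le_cancel_iff order_trans)
        then have "Es * (1 + h * (p - \<eta>)) \<le> Es * exp (integral {s..y} (ext T a \<xi>))"
          using Esp by (intro mult_left_mono) auto
        then show ?thesis using Xy unfolding Es_def by (simp add: exp_add)
      qed
      have "Z y \<le> Z s + \<epsilon> * h"
        unfolding Z_def using gronwall_step_alg[OF Vs0 Esp p eta etab h ep Vge[OF s(1,2)] Vyb V0[OF yT] Eyb] y s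
        unfolding Es_def by simp
      then show "Z y \<le> c + \<epsilon> * (y - a)" using Ps unfolding h_def by (simp add: algebra_simps)
    qed
    then show "\<exists>\<delta>>0. \<forall>y\<in>T. s < y \<and> y < s + \<delta> \<longrightarrow> Z y \<le> c + \<epsilon> * (y - a)" using dp(1) by blast
  next
    fix s assume s: "s \<in> T" "a < s" "s \<le> b" "ldense T s"
      and IH: "\<And>y. y \<in> T \<Longrightarrow> a \<le> y \<Longrightarrow> y < s \<Longrightarrow> Z y \<le> c + \<epsilon> * (y - a)"
    have cZ: "continuous_on {a..s} Z"
      unfolding Z_def V_def X_def
      by (intro continuous_intros indefinite_integral_continuous_1 iu ix) auto
    show "Z s \<le> c + \<epsilon> * (s - a)"
    proof (rule field_le_epsilon)
      fix \<eta> :: real assume eta: "\<eta> > 0"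
      obtain d where d: "d > 0" "\<forall>y\<in>{a..s}. dist y s < d \<longrightarrow> dist (Z y) (Z s) < \<eta>"
        using cZ eta s unfolding continuous_on_iff by (metis atLeastAtMost_iff less_imp_le order_refl)
      obtain y where y: "y \<in> T" "s - min d (s - a) < y" "y < s"
        using s(4) d(1) s(2) unfolding ldense_def by (metis diff_gt_0_iff_gt min_less_iff_conj)
      have "dist (Z y) (Z s) < \<eta>" using d y by (auto simp: dist_real_def)
      moreover have "Z y \<le> c + \<epsilon> * (y - a)" using IH y by auto
      moreover have "\<epsilon> * (y - a) \<le> \<epsilon> * (s - a)" using ep y by auto
      ultimately show "Z s \<le> c + \<epsilon> * (s - a) + \<eta>" by (auto simp: dist_real_def)
    qed
  qed (use bT in auto)
  have Zb: "Z b \<le> c"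
  proof (rule field_le_epsilon)
    fix e :: real assume e: "e > 0"
    have "Z b \<le> c + e / (b - a + 1) * (b - a)" using key[of "e / (b - a + 1)"] e bT by auto
    also have "e / (b - a + 1) * (b - a) \<le> e" using e bT by (auto simp: field_simps)
    finally show "Z b \<le> c + e" by simp
  qed
  have "u b \<le> V b" using Vge[OF bT] .
  also have "V b = Z b * exp (X b)" unfolding Z_def by simp
  also have "\<dots> \<le> c * exp (X b)" using Zb by (intro mult_right_mono) auto
  finally show ?thesis unfolding X_def \<xi>_def .
qed




lemma rep0:
  fixes f :: "real \<Rightarrow> 'a::banach"
  assumes "closed T" "a \<in> T" "RD T a f" "t \<in> T" "a \<le> t"
  shows "delta_integral T f a t = integral {a..t} (ext T a f)"
  using delta_integral_rep[OF assms(1-3) assms(2) order_refl assms(4,5)] by simp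

lemma ext_at: "closed T \<Longrightarrow> a \<in> T \<Longrightarrow> a \<le> r \<Longrightarrow> ext T a f r = f (tfl T r)"
  unfolding ext_def by simp

lemma X_mono:
  assumes cl: "closed T" and aT: "a \<in> T" and al: "0 \<le> \<alpha>" and "a \<le> s" "s \<le> s'"
  shows "integral {a..s} (ext T a (\<lambda>\<tau>. xi (mu T \<tau>) \<alpha>)) \<le> integral {a..s'} (ext T a (\<lambda>\<tau>. xi (mu T \<tau>) \<alpha>))"
proof -
  have RDx: "RD T a (\<lambda>\<tau>. xi (mu T \<tau>) \<alpha>)" by (rule RD_xi[OF al])
  have "0 \<le> integral {s..s'} (ext T a (\<lambda>\<tau>. xi (mu T \<tau>) \<alpha>))"
    by (rule integral_nonneg[OF ext_integrable[OF cl aT RDx]])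
       (use xi_bounds[OF mu_nonneg al] in \<open>auto simp: ext_def\<close>)
  then show ?thesis using int_split[OF cl aT RDx assms(4,5)] by simp
qed

lemma X_cont:
  fixes f :: "real \<Rightarrow> real"
  assumes cl: "closed T" and aT: "a \<in> T" and RDf: "RD T a f"
  shows "continuous_on {a..c} (\<lambda>r. integral {a..r} (ext T a f))"
  by (rule indefinite_integral_continuous_1[OF ext_integrable[OF cl aT RDf]])

lemma main_alg:
  fixes N E X B J C K d :: real
  assumes N: "0 \<le> N" "N < 1" and E: "E > 0"
    and ineq: "X \<le> N * (X + B / E * J + C / E * K) + d / E"
  shows "E * X \<le> (d / (1 - N) + N / (1 - N) * C * K) + B * (N / (1 - N)) * J"
proof -
  have "E * X \<le> E * (N * (X + B / E * J + C / E * K) + d / E)" using ineq E by (intro mult_left_mono) auto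
  also have "\<dots> = N * (E * X) + N * B * J + N * C * K + d" using E by (simp add: field_simps)
  finally have "(1 - N) * (E * X) \<le> N * B * J + N * C * K + d" by (simp add: algebra_simps)
  then have "E * X \<le> (N * B * J + N * C * K + d) / (1 - N)" using N by (simp add: le_divide_eq mult.commute)
  also have "\<dots> = N * B * J / (1 - N) + N * C * K / (1 - N) + d / (1 - N)"
    by (simp add: add_divide_distrib)
  also have "\<dots> = (d / (1 - N) + N / (1 - N) * C * K) + B * (N / (1 - N)) * J"
    by (simp add: algebra_simps)
  finally show ?thesis .
qed

theorem theorem5p1:
  fixes T :: "real set" and a b \<alpha> B C N d :: real
    and f :: "real \<Rightarrow> 'X::banach \<Rightarrow> 'X \<Rightarrow> 'X \<Rightarrow> 'X"
    and h g :: "real \<Rightarrow> real \<Rightarrow> 'X \<Rightarrow> 'X"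
    and x :: "real \<Rightarrow> 'X"
  defines "I \<equiv> {a..} \<inter> T"
  defines "Nstar \<equiv> N / (1 - N)"
  defines "q \<equiv> delta_integral T (\<lambda>s. C * Nstar * ts_exp T (\<lambda>_. B * Nstar) s a) a b"
  assumes TS: "time_scale T"
    and ab: "a \<in> T" "b \<in> T" "a < b"
    and f_rd: "\<And>u v w. rd_continuous_on T I (\<lambda>t. f t u v w)"
    and h_rd: "\<And>t v. t \<in> I \<Longrightarrow> rd_continuous_on T I (\<lambda>s. h t s v)"
    and g_rd: "\<And>t v. t \<in> I \<Longrightarrow> rd_continuous_on T I (\<lambda>s. g t s v)"
    and pos: "\<alpha> > 0" "B > 0" "C > 0"
    and N: "0 \<le> N" "N < 1"
    and f_lip: "\<And>t u v w u' v' w'. t \<in> I \<Longrightarrow>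
         norm (f t u v w - f t u' v' w') \<le> N * (norm (u - u') + norm (v - v') + norm (w - w'))"
    and h_lip: "\<And>t s v v'. t \<in> I \<Longrightarrow> s \<in> I \<Longrightarrow>
         norm (h t s v - h t s v') \<le> B * ts_exp T (\<lambda>_. \<alpha>) s t * norm (v - v')"
    and g_lip: "\<And>t s u u'. t \<in> I \<Longrightarrow> s \<in> I \<Longrightarrow>
         norm (g t s u - g t s u') \<le> C * ts_exp T (\<lambda>_. \<alpha>) s t * norm (u - u')"
    and q_lt: "q < 1"
    and d: "d \<ge> 0"
    and f0: "\<And>t. t \<in> I \<Longrightarrow>
         norm (f t 0 (delta_integral T (\<lambda>s. h t s 0) a t) (delta_integral T (\<lambda>s. g t s 0) a b))
           \<le> d / ts_exp T (\<lambda>_. \<alpha>) t a"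
    and x_rd: "rd_continuous_on T I x"
    and x_sol: "\<And>t. t \<in> I \<Longrightarrow>
         x t = f t (x t) (delta_integral T (\<lambda>s. h t s (x s)) a t) (delta_integral T (\<lambda>s. g t s (x s)) a b)"
  shows "\<And>t. t \<in> I \<Longrightarrow>
     norm (x t) \<le> d / ((1 - N) * (1 - q)) * ts_exp T (ts_ominus T (\<lambda>_. B * Nstar) (\<lambda>_. \<alpha>)) t a"
proof -
  fix t assume tI: "t \<in> I"
  have cl: "closed T" using TS unfolding time_scale_def by simp
  have aT: "a \<in> T" using ab by simp
  have Iiff: "s \<in> I \<longleftrightarrow> s \<in> T \<and> a \<le> s" for s unfolding I_def by auto
  have tT: "t \<in> T" "a \<le> t" using tI Iiff by auto
  have bI: "b \<in> T" "a \<le> b" using ab by auto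
  have N1: "1 - N > 0" using N by simp
  have Ns: "Nstar \<ge> 0" unfolding Nstar_def using N by simp
  define p where "p = B * Nstar"
  have p: "p \<ge> 0" unfolding p_def using Ns pos by simp
  define \<xi>a where "\<xi>a = (\<lambda>\<tau>. xi (mu T \<tau>) \<alpha>)"
  define \<xi>p where "\<xi>p = (\<lambda>\<tau>. xi (mu T \<tau>) p)"
  have RDa: "RD T a \<xi>a" unfolding \<xi>a_def by (rule RD_xi) (use pos in simp)
  have RDp: "RD T a \<xi>p" unfolding \<xi>p_def by (rule RD_xi[OF p])
  define Xa where "Xa r = integral {a..r} (ext T a \<xi>a)" for r
  define Xp where "Xp r = integral {a..r} (ext T a \<xi>p)" for r
  have Xa_mono: "Xa s \<le> Xa s'" if "a \<le> s" "s \<le> s'" for s s'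
    unfolding Xa_def \<xi>a_def by (rule X_mono[OF cl aT _ that]) (use pos in simp)
  have Xa_cont: "continuous_on {a..c} Xa" for c unfolding Xa_def by (rule X_cont[OF cl aT RDa])
  have Xp_cont: "continuous_on {a..c} Xp" for c unfolding Xp_def by (rule X_cont[OF cl aT RDp])
  have Xa_a: "Xa a = 0" unfolding Xa_def by simp
  have Xp_a: "Xp a = 0" unfolding Xp_def by simp
  have E1: "ts_exp T (\<lambda>_. \<alpha>) s t' = exp (Xa s - Xa t')" if "s \<in> I" "t' \<in> I" for s t'
    unfolding ts_exp_def using delta_integral_rep[OF cl aT RDa, of t' s] that Iiff
    unfolding Xa_def \<xi>a_def by simp
  have E2: "ts_exp T (\<lambda>_. p) s a = exp (Xp s)" if "s \<in> I" for s
    unfolding ts_exp_def using rep0[OF cl aT RDp, of s] that Iiff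
    unfolding Xp_def \<xi>p_def by simp
  have E3: "ts_exp T (ts_ominus T (\<lambda>_. B * Nstar) (\<lambda>_. \<alpha>)) t a = exp (Xp t - Xa t)"
  proof -
    have fe: "(\<lambda>\<tau>. xi (mu T \<tau>) (ts_ominus T (\<lambda>_. B * Nstar) (\<lambda>_. \<alpha>) \<tau>)) = (\<lambda>\<tau>. \<xi>p \<tau> - \<xi>a \<tau>)"
      unfolding ts_ominus_def \<xi>p_def \<xi>a_def p_def
      using xi_ominus[OF mu_nonneg _ pos(1)] p unfolding p_def by auto
    have RDd: "RD T a (\<lambda>\<tau>. \<xi>p \<tau> - \<xi>a \<tau>)" by (rule RD_diff[OF RDp RDa])
    have "delta_integral T (\<lambda>\<tau>. \<xi>p \<tau> - \<xi>a \<tau>) a t = integral {a..t} (ext T a (\<lambda>\<tau>. \<xi>p \<tau> - \<xi>a \<tau>))"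
      by (rule rep0[OF cl aT RDd tT])
    also have "\<dots> = integral {a..t} (\<lambda>r. ext T a \<xi>p r - ext T a \<xi>a r)"
      by (rule integral_cong) (simp add: ext_def)
    also have "\<dots> = Xp t - Xa t" unfolding Xp_def Xa_def
      by (rule Henstock_Kurzweil_Integration.integral_diff; rule ext_integrable[OF cl aT]; fact)
    finally show ?thesis unfolding ts_exp_def fe by simp
  qed
  have RDx: "RD T a x" using rd_to_RD x_rd unfolding I_def by blast
  have Lip_h: "\<exists>K\<ge>0. \<forall>s\<in>T. a \<le> s \<longrightarrow> s < t0 + 1 \<longrightarrow> (\<forall>v v'. norm (h t' s v - h t' s v') \<le> K * norm (v - v'))"
    if "t' \<in> I" for t' t0
  proof (intro exI[of _ "B * exp (Xa (max a (t0 + 1)) - Xa t')"] conjI ballI impI allI)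
    show "0 \<le> B * exp (Xa (max a (t0 + 1)) - Xa t')" using pos by simp
    fix s v v' assume s: "s \<in> T" "a \<le> s" "s < t0 + 1"
    have "norm (h t' s v - h t' s v') \<le> B * ts_exp T (\<lambda>_. \<alpha>) s t' * norm (v - v')"
      using h_lip[OF that] s Iiff by auto
    also have "\<dots> = B * exp (Xa s - Xa t') * norm (v - v')" using E1 s that Iiff by simp
    also have "\<dots> \<le> B * exp (Xa (max a (t0 + 1)) - Xa t') * norm (v - v')"
      using Xa_mono[of s "max a (t0 + 1)"] s pos by (intro mult_right_mono mult_left_mono) auto
    finally show "norm (h t' s v - h t' s v') \<le> B * exp (Xa (max a (t0 + 1)) - Xa t') * norm (v - v')" .
  qed
  have Lip_g: "\<exists>K\<ge>0. \<forall>s\<in>T. a \<le> s \<longrightarrow> s < t0 + 1 \<longrightarrow> (\<forall>v v'. norm (g t' s v - g t' s v') \<le> K * norm (v - v'))"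
    if "t' \<in> I" for t' t0
  proof (intro exI[of _ "C * exp (Xa (max a (t0 + 1)) - Xa t')"] conjI ballI impI allI)
    show "0 \<le> C * exp (Xa (max a (t0 + 1)) - Xa t')" using pos by simp
    fix s v v' assume s: "s \<in> T" "a \<le> s" "s < t0 + 1"
    have "norm (g t' s v - g t' s v') \<le> C * ts_exp T (\<lambda>_. \<alpha>) s t' * norm (v - v')"
      using g_lip[OF that] s Iiff by auto
    also have "\<dots> = C * exp (Xa s - Xa t') * norm (v - v')" using E1 s that Iiff by simp
    also have "\<dots> \<le> C * exp (Xa (max a (t0 + 1)) - Xa t') * norm (v - v')"
      using Xa_mono[of s "max a (t0 + 1)"] s pos by (intro mult_right_mono mult_left_mono) auto
    finally show "norm (g t' s v - g t' s v') \<le> C * exp (Xa (max a (t0 + 1)) - Xa t') * norm (v - v')" .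
  qed
  have RDh: "RD T a (\<lambda>s. h t' s v)" if "t' \<in> I" for t' v using rd_to_RD h_rd[OF that] unfolding I_def by blast
  have RDg: "RD T a (\<lambda>s. g t' s v)" if "t' \<in> I" for t' v using rd_to_RD g_rd[OF that] unfolding I_def by blast
  have RDhx: "RD T a (\<lambda>s. h t' s (x s))" if "t' \<in> I" for t'
    by (rule RD_comp_lip[OF RDx RDh[OF that] Lip_h[OF that]])
  have RDgx: "RD T a (\<lambda>s. g t' s (x s))" if "t' \<in> I" for t'
    by (rule RD_comp_lip[OF RDx RDg[OF that] Lip_g[OF that]])
  define u where "u s = exp (Xa s) * norm (x s)" for s
  have RDu: "RD T a u" unfolding u_def
    by (rule RD_mult[OF RD_cont RD_norm[OF RDx]]) (intro continuous_intros Xa_cont)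
  have u0: "u s \<ge> 0" for s unfolding u_def by simp
  have iu: "ext T a u integrable_on {lo..hi}" for lo hi by (rule ext_integrable[OF cl aT RDu])
  have extu0: "ext T a u r \<ge> 0" for r unfolding ext_def using u0 by simp
  define K where "K = integral {a..b} (ext T a u)"
  have K0: "K \<ge> 0" unfolding K_def by (rule integral_nonneg[OF iu extu0])
  define c0 where "c0 = d / (1 - N) + Nstar * C * K"
  have c0: "c0 \<ge> 0" unfolding c0_def using d N1 Ns pos K0 by simp
  have ineq: "u s \<le> c0 + p * integral {a..s} (ext T a u)" if sT: "s \<in> T" "a \<le> s" for s
  proof -
    have sI: "s \<in> I" using sT Iiff by simp
    define Ih where "Ih = delta_integral T (\<lambda>r. h s r (x r)) a s"
    define Ih0 where "Ih0 = delta_integral T (\<lambda>r. h s r 0) a s"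
    define Ig where "Ig = delta_integral T (\<lambda>r. g s r (x r)) a b"
    define Ig0 where "Ig0 = delta_integral T (\<lambda>r. g s r 0) a b"
    have Es: "exp (Xa s) > 0" by simp
    have Ih: "Ih - Ih0 = integral {a..s} (\<lambda>r. ext T a (\<lambda>r. h s r (x r)) r - ext T a (\<lambda>r. h s r 0) r)"
      unfolding Ih_def Ih0_def rep0[OF cl aT RDhx[OF sI] sT] rep0[OF cl aT RDh[OF sI] sT]
      by (rule Henstock_Kurzweil_Integration.integral_diff[symmetric];
          rule ext_integrable[OF cl aT]; intro RDhx RDh sI)
    have Ig: "Ig - Ig0 = integral {a..b} (\<lambda>r. ext T a (\<lambda>r. g s r (x r)) r - ext T a (\<lambda>r. g s r 0) r)"
      unfolding Ig_def Ig0_def rep0[OF cl aT RDgx[OF sI] bI] rep0[OF cl aT RDg[OF sI] bI]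
      by (rule Henstock_Kurzweil_Integration.integral_diff[symmetric];
          rule ext_integrable[OF cl aT]; intro RDgx RDg sI)
    have bh: "norm (Ih - Ih0) \<le> B / exp (Xa s) * integral {a..s} (ext T a u)"
    proof -
      have "norm (Ih - Ih0) \<le> integral {a..s} (\<lambda>r. B / exp (Xa s) * ext T a u r)"
        unfolding Ih
      proof (rule integral_norm_bound_integral)
        show "(\<lambda>r. ext T a (\<lambda>r. h s r (x r)) r - ext T a (\<lambda>r. h s r 0) r) integrable_on {a..s}"
          by (intro Henstock_Kurzweil_Integration.integrable_diff ext_integrable[OF cl aT] RDhx RDh sI)
        show "(\<lambda>r. B / exp (Xa s) * ext T a u r) integrable_on {a..s}"
          by (rule integrable_on_cmult_left[OF iu, simplified])
        fix r assume r: "r \<in> {a..s}"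
        have tr: "tfl T r \<in> T" "a \<le> tfl T r" "tfl T r \<le> r" using tfl_props[OF cl aT, of r] r by auto
        have trI: "tfl T r \<in> I" using tr Iiff by simp
        have "norm (h s (tfl T r) (x (tfl T r)) - h s (tfl T r) 0) \<le> B * ts_exp T (\<lambda>_. \<alpha>) (tfl T r) s * norm (x (tfl T r) - 0)"
          by (rule h_lip[OF sI trI])
        also have "\<dots> = B / exp (Xa s) * u (tfl T r)"
          unfolding E1[OF trI sI] u_def by (simp add: exp_diff)
        finally show "norm (ext T a (\<lambda>r. h s r (x r)) r - ext T a (\<lambda>r. h s r 0) r) \<le> B / exp (Xa s) * ext T a u r"
          using r by (simp add: ext_def)
      qed
      also have "\<dots> = B / exp (Xa s) * integral {a..s} (ext T a u)" by (rule integral_mult[OF iu, symmetric])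
      finally show ?thesis .
    qed
    have bg: "norm (Ig - Ig0) \<le> C / exp (Xa s) * K"
    proof -
      have "norm (Ig - Ig0) \<le> integral {a..b} (\<lambda>r. C / exp (Xa s) * ext T a u r)"
        unfolding Ig
      proof (rule integral_norm_bound_integral)
        show "(\<lambda>r. ext T a (\<lambda>r. g s r (x r)) r - ext T a (\<lambda>r. g s r 0) r) integrable_on {a..b}"
          by (intro Henstock_Kurzweil_Integration.integrable_diff ext_integrable[OF cl aT] RDgx RDg sI)
        show "(\<lambda>r. C / exp (Xa s) * ext T a u r) integrable_on {a..b}"
          by (rule integrable_on_cmult_left[OF iu, simplified])
        fix r assume r: "r \<in> {a..b}"
        have tr: "tfl T r \<in> T" "a \<le> tfl T r" "tfl T r \<le> r" using tfl_props[OF cl aT, of r] r by auto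
        have trI: "tfl T r \<in> I" using tr Iiff by simp
        have "norm (g s (tfl T r) (x (tfl T r)) - g s (tfl T r) 0) \<le> C * ts_exp T (\<lambda>_. \<alpha>) (tfl T r) s * norm (x (tfl T r) - 0)"
          by (rule g_lip[OF sI trI])
        also have "\<dots> = C / exp (Xa s) * u (tfl T r)"
          unfolding E1[OF trI sI] u_def by (simp add: exp_diff)
        finally show "norm (ext T a (\<lambda>r. g s r (x r)) r - ext T a (\<lambda>r. g s r 0) r) \<le> C / exp (Xa s) * ext T a u r"
          using r by (simp add: ext_def)
      qed
      also have "\<dots> = C / exp (Xa s) * K" unfolding K_def by (rule integral_mult[OF iu, symmetric])
      finally show ?thesis .
    qed
    have "norm (x s) = norm (f s (x s) Ih Ig)" using x_sol[OF sI] unfolding Ih_def Ig_def by simp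
    also have "\<dots> \<le> norm (f s (x s) Ih Ig - f s 0 Ih0 Ig0) + norm (f s 0 Ih0 Ig0)"
      using norm_triangle_sub[of "f s (x s) Ih Ig" "f s 0 Ih0 Ig0"] by simp
    also have "\<dots> \<le> N * (norm (x s - 0) + norm (Ih - Ih0) + norm (Ig - Ig0)) + d / ts_exp T (\<lambda>_. \<alpha>) s a"
      using f_lip[OF sI, of "x s" Ih Ig 0 Ih0 Ig0] f0[OF sI] unfolding Ih0_def Ig0_def by linarith
    also have "\<dots> \<le> N * (norm (x s) + B / exp (Xa s) * integral {a..s} (ext T a u) + C / exp (Xa s) * K) + d / exp (Xa s)"
    proof -
      have "ts_exp T (\<lambda>_. \<alpha>) s a = exp (Xa s)" using E1[OF sI] Iiff aT Xa_a by simp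
      moreover have "N * (norm (x s - 0) + norm (Ih - Ih0) + norm (Ig - Ig0)) \<le>
         N * (norm (x s) + B / exp (Xa s) * integral {a..s} (ext T a u) + C / exp (Xa s) * K)"
        using bh bg N by (intro mult_left_mono) auto
      ultimately show ?thesis by simp
    qed
    finally have "exp (Xa s) * norm (x s) \<le> (d / (1 - N) + N / (1 - N) * C * K) + B * (N / (1 - N)) * integral {a..s} (ext T a u)"
      by (rule main_alg[OF N Es])
    then show ?thesis unfolding u_def c0_def p_def Nstar_def by simp
  qed
  have gw: "u s \<le> c0 * exp (Xp s)" if "s \<in> T" "a \<le> s" for s
    using gronwall[OF cl aT p c0 RDu u0 ineq that] unfolding Xp_def \<xi>p_def by simp
  define Q where "Q = integral {a..b} (ext T a (\<lambda>s. exp (Xp s)))"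
  have RDe: "RD T a (\<lambda>s. exp (Xp s))" by (rule RD_cont) (intro continuous_intros Xp_cont)
  have ie: "ext T a (\<lambda>s. exp (Xp s)) integrable_on {lo..hi}" for lo hi by (rule ext_integrable[OF cl aT RDe])
  have KQ: "K \<le> c0 * Q"
  proof -
    have "K \<le> integral {a..b} (\<lambda>r. c0 * ext T a (\<lambda>s. exp (Xp s)) r)"
      unfolding K_def
    proof (rule integral_le[OF iu])
      show "(\<lambda>r. c0 * ext T a (\<lambda>s. exp (Xp s)) r) integrable_on {a..b}"
        by (rule integrable_on_cmult_left[OF ie, simplified])
      fix r assume r: "r \<in> {a..b}"
      have tr: "tfl T r \<in> T" "a \<le> tfl T r" using tfl_props[OF cl aT, of r] r by auto
      show "ext T a u r \<le> c0 * ext T a (\<lambda>s. exp (Xp s)) r" using gw[OF tr] r by (simp add: ext_def)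
    qed
    also have "\<dots> = c0 * Q" unfolding Q_def by (rule integral_mult[OF ie, symmetric])
    finally show ?thesis .
  qed
  have qQ: "q = C * Nstar * Q"
  proof -
    have RDq: "RD T a (\<lambda>s. C * Nstar * ts_exp T (\<lambda>_. B * Nstar) s a)"
      by (rule RD_cong[OF RD_mult[OF RD_const[of T a "C * Nstar"] RDe]]) (use E2 Iiff p_def in auto)
    have "q = integral {a..b} (ext T a (\<lambda>s. C * Nstar * ts_exp T (\<lambda>_. B * Nstar) s a))"
      unfolding q_def by (rule rep0[OF cl aT RDq bI])
    also have "\<dots> = integral {a..b} (\<lambda>r. C * Nstar * ext T a (\<lambda>s. exp (Xp s)) r)"
    proof (rule integral_cong)
      fix r assume r: "r \<in> {a..b}"
      have tr: "tfl T r \<in> I" using tfl_props[OF cl aT, of r] r Iiff by auto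
      show "ext T a (\<lambda>s. C * Nstar * ts_exp T (\<lambda>_. B * Nstar) s a) r = C * Nstar * ext T a (\<lambda>s. exp (Xp s)) r"
        using E2[OF tr] r unfolding p_def by (simp add: ext_def)
    qed
    also have "\<dots> = C * Nstar * Q" unfolding Q_def by (rule integral_mult[OF ie, symmetric])
    finally show ?thesis .
  qed
  have c0b: "c0 \<le> d / ((1 - N) * (1 - q))"
  proof -
    have "Nstar * C * K \<le> Nstar * C * (c0 * Q)" using KQ Ns pos by (intro mult_left_mono) auto
    also have "\<dots> = c0 * q" using qQ by (simp add: algebra_simps)
    finally have "c0 \<le> d / (1 - N) + c0 * q" unfolding c0_def by simp
    then have "c0 * (1 - q) \<le> d / (1 - N)" by (simp add: algebra_simps)
    then show ?thesis using q_lt N1 by (simp add: le_divide_eq divide_le_eq mult.commute mult.left_commute)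
  qed
  have "norm (x t) = u t / exp (Xa t)" unfolding u_def by simp
  also have "\<dots> \<le> c0 * exp (Xp t) / exp (Xa t)" using gw[OF tT] by (intro divide_right_mono) auto
  also have "\<dots> = c0 * exp (Xp t - Xa t)" by (simp add: exp_diff)
  also have "\<dots> \<le> d / ((1 - N) * (1 - q)) * exp (Xp t - Xa t)" using c0b by (intro mult_right_mono) auto
  also have "\<dots> = d / ((1 - N) * (1 - q)) * ts_exp T (ts_ominus T (\<lambda>_. B * Nstar) (\<lambda>_. \<alpha>)) t a"
    using E3 by simp
  finally show "norm (x t) \<le> d / ((1 - N) * (1 - q)) * ts_exp T (ts_ominus T (\<lambda>_. B * Nstar) (\<lambda>_. \<alpha>)) t a" .
qed



end
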